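(* Let $q$ be an odd prime power, let $d\geq 2$ be an integer, let $\mathcal{E}\subseteq\mathbb{F}_q^d$, and let $k\geq2$ be an integer. \begin{itemize} \item If $q\geq5$, $d\geq2$ is even, $r\in\mathbb{F}_q^*$ and $|\mathcal{E}|\geq\left(31+10\binom{k}{2}\right)q^{d/2}$, then $\mathcal{E}$ contains a pair of $k$-stars with dilation ratio $r$. \item If $d\geq3$ is odd, $r\in\mathbb{F}_q^+$ and $|\mathcal{E}|\geq\left(4+\sqrt3\binom{k}{2}\right)q^{d/2}$, then $\mathcal{E}$ contains a pair of $k$-stars with dilation ratio $r$. \end{itemize}
   Context: $\mathbb{F}_q$ is the finite field with $q$ elements, $\mathbb{F}_q^*$ its nonzero elements, and $\mathbb{F}_q^+$ the set of nonzero quadratic residues (nonzero squares) in $\mathbb{F}_q$. For $\bm{x}=(x_1,\ldots,x_d)\in\mathbb{F}_q^d$, $\|\bm{x}\|:=x_1^2+\cdots+x_d^2$. Let $G=(V,E)$ be a graph with $V=\{1,\ldots,n\}$ and $E\subseteq\binom{V}{2}$. A set $\mathcal{E}\subseteq\mathbb{F}_q^d$ contains a pair of $G$ with dilation ratio $r$ if there exist distinct $\bm{x}_1,\ldots,\bm{x}_n\in\mathcal{E}$ and distinct $\bm{y}_1,\ldots,\bm{y}_n\in\mathcal{E}$ such that $\|\bm{y}_i-\bm{y}_j\|=r\|\bm{x}_i-\bm{x}_j\|\neq0$ whenever $\{i,j\}\in E$. A $k$-star is the graph with vertex set $\{1,\ldots,k+1\}$ and edge set $\{\{1,2\},\{1,3\},\ldots,\{1,k+1\}\}$.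 *)

theory Defs
  imports "HOL-Analysis.Analysis"
begin

text \<open>The "norm" ||x|| = x_1^2 + ... + x_d^2 on F_q^d (vectors indexed by a finite type).\<close>
definition sqnorm :: "'a::comm_ring_1 ^ 'n \<Rightarrow> 'a" where
  "sqnorm x = (\<Sum>i\<in>UNIV. (x $ i)^2)"

definition nonzero_squares :: "'a::field set" where
  "nonzero_squares = {y. \<exists>z. z \<noteq> 0 \<and> y = z^2}"

text \<open>A graph on vertex set {1..n} with edge set Ed (a set of 2-element sets of vertices).
  The set S contains a pair of G with dilation ratio r.\<close>
definition contains_pair ::
  "('a::field ^ 'n) set \<Rightarrow> nat \<Rightarrow> nat set set \<Rightarrow> 'a \<Rightarrow> bool" where
  "contains_pair S n Ed r \<longleftrightarrow>
     (\<exists>x y :: nat \<Rightarrow> 'a ^ 'n.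
        inj_on x {1..n} \<and> inj_on y {1..n} \<and>
        x ` {1..n} \<subseteq> S \<and> y ` {1..n} \<subseteq> S \<and>
        (\<forall>i j. {i, j} \<in> Ed \<longrightarrow>
           sqnorm (y i - y j) = r * sqnorm (x i - x j) \<and> sqnorm (x i - x j) \<noteq> 0))"

definition star_edges :: "nat \<Rightarrow> nat set set" where
  "star_edges k = {{1, j} | j. 2 \<le> j \<and> j \<le> k + 1}"

definition contains_star_pair :: "('a::field ^ 'n) set \<Rightarrow> nat \<Rightarrow> 'a \<Rightarrow> bool" where
  "contains_star_pair S k r \<longleftrightarrow> contains_pair S (k + 1) (star_edges k) r"

end

theory Submission
  imports Defs "HOL-Number_Theory.Number_Theory"
begin


lemma two_neq_zero_oddcard:
  assumes "odd CARD('a::{field,finite})"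
  shows "(2::'a) \<noteq> 0"
proof
  assume h: "(2::'a) = 0"
  have "of_nat 2 = (0::'a)" using h by simp
  hence "CHAR('a) dvd 2" by (simp only: of_nat_eq_0_iff_char_dvd)
  moreover have "CHAR('a) dvd CARD('a)" by (rule CHAR_dvd_CARD)
  moreover have "CHAR('a) \<noteq> 1" by simp
  ultimately have "CHAR('a) = 2"
    using dvd_antisym by (metis One_nat_def dvd_refl nat_dvd_1_iff_1 prime_nat_iff two_is_prime_nat)
  thus False using assms \<open>CHAR('a) dvd CARD('a)\<close> by auto
qed

lemma prime_CHAR_finite: "prime CHAR('a::{field,finite})"
  by (rule prime_CHAR_semidom) (simp add: finite_imp_CHAR_pos)

definition addsub :: "'a::field set \<Rightarrow> bool" where
  "addsub H \<longleftrightarrow> 0 \<in> H \<and> (\<forall>x\<in>H. \<forall>y\<in>H. x + y \<in> H)"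

lemma addsub_nat_mult:
  assumes "addsub H" "h \<in> H" shows "of_nat n * h \<in> H"
proof (induction n)
  case 0 thus ?case using assms by (simp add: addsub_def)
next
  case (Suc n)
  have "of_nat (Suc n) * h = of_nat n * h + h" by (simp add: distrib_right)
  thus ?case using Suc assms unfolding addsub_def by metis
qed

lemma addsub_uminus:
  fixes H :: "'a::{field,finite} set"
  assumes "addsub H" "h \<in> H" shows "- h \<in> H"
proof -
  define p where "p = CHAR('a)"
  have p1: "p \<ge> 1" using finite_imp_CHAR_pos[of] p_def by (simp add: Suc_leI finite_imp_CHAR_pos)
  have "of_nat (p - 1) * h + h = of_nat p * h"
    using p1 by (metis (no_types, lifting) add.commute add_diff_inverse_nat distrib_right
        less_one mult_1 not_le of_nat_1 of_nat_add)
  also have "\<dots> = 0" by (simp add: p_def)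
  finally have "- h = of_nat (p - 1) * h"
    by (metis add.commute minus_unique)
  thus ?thesis using addsub_nat_mult[OF assms] by simp
qed

lemma addsub_int_mult:
  fixes H :: "'a::{field,finite} set"
  assumes "addsub H" "h \<in> H" shows "of_int z * h \<in> H"
proof (cases "z \<ge> 0")
  case True
  then obtain n where "z = int n" by (metis nonneg_eq_int)
  thus ?thesis using addsub_nat_mult[OF assms] by simp
next
  case False
  then obtain n where "z = - int n" by (metis linear minus_minus neg_0_le_iff_le nonneg_eq_int)
  thus ?thesis using addsub_uminus[OF assms(1) addsub_nat_mult[OF assms]] by simp
qed

lemma addsub_diff:
  fixes H :: "'a::{field,finite} set"
  assumes "addsub H" "x \<in> H" "y \<in> H" shows "x - y \<in> H"
  using assms addsub_uminus[OF assms(1,3)] unfolding addsub_def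
  by (metis diff_conv_add_uminus)

definition good_sub :: "'a::field set \<Rightarrow> bool" where
  "good_sub H \<longleftrightarrow> addsub H \<and> 1 \<notin> H"

lemma exists_max_good_sub:
  "\<exists>H::'a::{field,finite} set. good_sub H \<and> (\<forall>H'::'a set. good_sub H' \<longrightarrow> card H' \<le> card H)"
proof -
  have "good_sub ({0}::'a set)" by (simp add: good_sub_def addsub_def)
  moreover have "\<forall>H::'a set. good_sub H \<longrightarrow> card H < Suc CARD('a)"
    by (simp add: card_mono less_Suc_eq_le)
  ultimately show ?thesis by (rule Lattices_Big.ex_has_greatest_nat[of good_sub "{0}" card "Suc CARD('a)"])
qed

lemma good_sub_of_int:
  fixes H :: "'a::{field,finite} set"
  assumes "good_sub H" "of_int m \<in> H"
  shows "int CHAR('a) dvd m"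
proof (rule ccontr)
  assume nd: "\<not> int CHAR('a) dvd m"
  have pr: "prime (int CHAR('a))" using prime_CHAR_finite by simp
  hence "coprime m (int CHAR('a))" using nd
    by (metis coprime_commute prime_imp_coprime)
  then obtain m' where m': "[m * m' = 1] (mod int CHAR('a))"
    by (metis cong_solve_coprime_int)
  have "of_int m' * of_int m \<in> H" using addsub_int_mult assms good_sub_def by blast
  moreover have "of_int (m * m') = (of_int 1 :: 'a)"
    using m' by (simp only: of_int_eq_iff_cong_CHAR)
  ultimately have "(1::'a) \<in> H" by (simp add: mult.commute)
  thus False using assms good_sub_def by blast
qed

lemma good_sub_of_nat:
  fixes H :: "'a::{field,finite} set"
  assumes "good_sub H" "of_nat a - of_nat b \<in> H"
  shows "[a = b] (mod CHAR('a))"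
proof -
  have "of_int (int a - int b) \<in> H" using assms(2) by simp
  hence "int CHAR('a) dvd int a - int b" using good_sub_of_int assms(1) by blast
  thus ?thesis by (metis cong_iff_dvd_diff cong_int_iff)
qed

lemma max_good_sub_cover:
  fixes H :: "'a::{field,finite} set"
  assumes g: "good_sub H" and mx: "\<forall>H'::'a set. good_sub H' \<longrightarrow> card H' \<le> card H"
  shows "\<exists>j. x - of_nat j \<in> H"
proof (cases "x \<in> H")
  case True thus ?thesis by (rule_tac x=0 in exI) simp
next
  case False
  have aH: "addsub H" using g good_sub_def by blast
  define H' where "H' = {h + of_nat i * x | h i. h \<in> H}"
  have "addsub H'"
    unfolding addsub_def H'_def
  proof (intro conjI ballI)
    have "(0::'a) = 0 + of_nat 0 * x" "(0::'a) \<in> H" using aH addsub_def by auto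
    thus "0 \<in> {h + of_nat i * x |h i. h \<in> H}" by blast
  next
    fix a b assume "a \<in> {h + of_nat i * x |h i. h \<in> H}" "b \<in> {h + of_nat i * x |h i. h \<in> H}"
    then obtain h1 i1 h2 i2 where "a = h1 + of_nat i1 * x" "b = h2 + of_nat i2 * x" "h1 \<in> H" "h2 \<in> H"
      by blast
    hence "a + b = (h1 + h2) + of_nat (i1 + i2) * x" "h1 + h2 \<in> H"
      using aH by (auto simp: addsub_def algebra_simps)
    thus "a + b \<in> {h + of_nat i * x |h i. h \<in> H}" by blast
  qed
  have sub: "H \<subseteq> H'" unfolding H'_def by (force intro: exI[of _ 0])
  have "x \<in> H'" unfolding H'_def using aH addsub_def by (force intro: exI[of _ 1])
  hence "card H < card H'" using sub False by (metis finite psubsetI psubset_card_mono)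
  hence "\<not> good_sub H'" using mx by (meson leD)
  hence "1 \<in> H'" using \<open>addsub H'\<close> good_sub_def by blast
  then obtain h i where hi: "1 = h + of_nat i * x" "h \<in> H" unfolding H'_def by blast
  have "\<not> CHAR('a) dvd i"
  proof
    assume "CHAR('a) dvd i"
    hence "of_nat i = (0::'a)" by (simp add: of_nat_eq_0_iff_char_dvd)
    hence "(1::'a) \<in> H" using hi by simp
    thus False using g good_sub_def by blast
  qed
  hence "coprime i CHAR('a)" using prime_CHAR_finite
    by (metis coprime_commute prime_imp_coprime)
  then obtain i' where i': "[i * i' = 1] (mod CHAR('a))"
    using cong_solve_coprime_nat by auto
  have ii: "of_nat (i * i') = (1::'a)" using i' by (metis of_nat_1 of_nat_eq_iff_cong_CHAR)
  have "of_nat i' * (1::'a) = of_nat i' * (h + of_nat i * x)"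
    using hi(1) by simp
  also have "\<dots> = of_nat i' * h + of_nat (i * i') * x"
    by (simp add: algebra_simps)
  finally have "of_nat i' * (1::'a) = of_nat i' * h + of_nat (i * i') * x" .
  hence "of_nat i' = of_nat i' * h + x" using ii by simp
  hence "x - of_nat i' = - (of_nat i' * h)" by (simp add: algebra_simps)
  moreover have "- (of_nat i' * h) \<in> H" using addsub_uminus[OF aH addsub_nat_mult[OF aH hi(2)]] .
  ultimately show ?thesis by metis
qed

lemma exists_add_char:
  assumes "odd CARD('a::{field,finite})"
  shows "\<exists>ch::'a \<Rightarrow> complex. (\<forall>x y. ch (x + y) = ch x * ch y) \<and> (\<forall>x. cmod (ch x) = 1) \<and> ch 1 \<noteq> 1"
proof -
  obtain H :: "'a set" where g: "good_sub H" and mx: "\<forall>H'::'a set. good_sub H' \<longrightarrow> card H' \<le> card H"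
    using exists_max_good_sub by blast
  have aH: "addsub H" using g good_sub_def by blast
  define p where "p = CHAR('a)"
  have pp: "prime p" using prime_CHAR_finite p_def by simp
  have p2: "p \<noteq> 2"
  proof
    assume "p = 2"
    hence "of_nat 2 = (0::'a)" unfolding p_def by (metis of_nat_CHAR)
    thus False using two_neq_zero_oddcard[OF assms] by simp
  qed
  have p3: "p \<ge> 3" using pp p2 prime_ge_2_nat by (metis eval_nat_numeral(3) le_antisym not_less_eq_eq)
  define \<phi> where "\<phi> x = (SOME j. x - of_nat j \<in> H)" for x :: 'a
  have \<phi>: "x - of_nat (\<phi> x) \<in> H" for x
    unfolding \<phi>_def using max_good_sub_cover[OF g mx] by (rule someI_ex)
  define \<omega> where "\<omega> = cis (2 * pi / p)"
  have "\<omega> ^ p = cis (real p * (2 * pi / p))" unfolding \<omega>_def by (rule Complex.DeMoivre)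
  also have "\<dots> = cis (2 * pi)" using pp by (simp add: prime_gt_0_nat)
  finally have \<omega>p: "\<omega> ^ p = 1" by simp
  have \<omega>cong: "\<omega> ^ a = \<omega> ^ b" if "[a = b] (mod p)" for a b
  proof -
    have mp: "\<omega> ^ c = \<omega> ^ (c mod p)" for c
    proof -
      have "\<omega> ^ c = \<omega> ^ (p * (c div p) + c mod p)" by simp
      also have "\<dots> = (\<omega> ^ p) ^ (c div p) * \<omega> ^ (c mod p)" by (simp only: power_add power_mult)
      finally show ?thesis using \<omega>p by simp
    qed
    have "\<omega> ^ a = \<omega> ^ (a mod p)" by (rule mp)
    also have "\<dots> = \<omega> ^ (b mod p)" using that by (simp add: cong_def)
    also have "\<dots> = \<omega> ^ b" by (rule mp[symmetric])
    finally show ?thesis .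
  qed
  define ch where "ch x = \<omega> ^ \<phi> x" for x
  have hom: "ch (x + y) = ch x * ch y" for x y
  proof -
    have "(x + y - of_nat (\<phi> (x + y))) - (x - of_nat (\<phi> x)) - (y - of_nat (\<phi> y)) \<in> H"
      using addsub_diff[OF aH] \<phi> by metis
    hence "of_nat (\<phi> x + \<phi> y) - of_nat (\<phi> (x + y)) \<in> H" by (simp add: algebra_simps)
    hence "[\<phi> x + \<phi> y = \<phi> (x + y)] (mod p)" using good_sub_of_nat[OF g] p_def by blast
    thus ?thesis unfolding ch_def by (metis \<omega>cong power_add)
  qed
  have nrm: "cmod (ch x) = 1" for x unfolding ch_def \<omega>_def by (simp add: norm_power)
  have "[\<phi> 1 = 1] (mod p)"
  proof -
    have "of_nat (\<phi> 1) - of_nat 1 \<in> H" using \<phi>[of 1] addsub_uminus[OF aH] by (metis minus_diff_eq of_nat_1)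
    thus ?thesis using good_sub_of_nat[OF g] p_def by blast
  qed
  hence "ch 1 = \<omega>" unfolding ch_def using \<omega>cong by fastforce
  moreover have "\<omega> \<noteq> 1"
  proof
    assume "\<omega> = 1"
    hence "Im \<omega> = 0" by simp
    moreover have "sin (2 * pi / p) > 0"
      using p3 by (intro sin_gt_zero) (auto simp: field_simps)
    ultimately show False unfolding \<omega>_def by simp
  qed
  ultimately show ?thesis using hom nrm by blast
qed


lemma sum_shift_univ:
  fixes f :: "'a::{ab_group_add,finite} \<Rightarrow> 'b::comm_monoid_add"
  shows "(\<Sum>x\<in>UNIV. f (x + c)) = (\<Sum>x\<in>UNIV. f x)"
  by (rule sum.reindex_bij_witness[of _ "\<lambda>x. x - c" "\<lambda>x. x + c"]) auto

lemma sum_scale_univ: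
  fixes f :: "'a::{field,finite} \<Rightarrow> 'b::comm_monoid_add"
  assumes "a \<noteq> 0"
  shows "(\<Sum>x\<in>UNIV. f (a * x)) = (\<Sum>x\<in>UNIV. f x)"
  using assms by (intro sum.reindex_bij_witness[of _ "\<lambda>x. x / a" "\<lambda>x. a * x"]) auto

lemma sum_inverse_nonzero:
  fixes f :: "'a::{field,finite} \<Rightarrow> 'b::comm_monoid_add"
  shows "(\<Sum>x\<in>UNIV-{0}. f (inverse x)) = (\<Sum>x\<in>UNIV-{0}. f x)"
  by (rule sum.reindex_bij_witness[of _ "\<lambda>x. inverse x" "\<lambda>x. inverse x"]) auto

definition qc :: "'a::field \<Rightarrow> 'b::ring_1" where
  "qc x = (if x = 0 then 0 else if (\<exists>y. y^2 = x) then 1 else -1)"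

definition sqs :: "'a::field set" where
  "sqs = {x. x \<noteq> 0 \<and> (\<exists>y. y^2 = x)}"

lemma roots_square:
  fixes y :: "'a::field"
  shows "{x. x^2 = y^2} = {y, -y}"
proof -
  have "x^2 = y^2 \<longleftrightarrow> x = y \<or> x = -y" for x
    by (metis power2_eq_iff)
  thus ?thesis by auto
qed

context
  assumes oddq: "odd CARD('a::{field,finite})"
begin

lemma two_nz: "(2::'a) \<noteq> 0" using two_neq_zero_oddcard[OF oddq] .

lemma card_roots:
  fixes t :: 'a
  shows "card {x. x^2 = t} = (if t = 0 then 1 else if (\<exists>y. y^2 = t) then 2 else 0)"
proof (cases "t = 0")
  case True thus ?thesis by simp
next
  case False
  show ?thesis
  proof (cases "\<exists>y. y^2 = t")
    case True
    then obtain y where y: "y^2 = t" by blast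
    hence "y \<noteq> 0" using False by auto
    have "y \<noteq> -y"
    proof
      assume h: "y = -y"
      have "2 * y = y - (-y)" by simp
      also have "\<dots> = y - y" by (simp only: h[symmetric])
      finally have "2 * y = 0" by simp
      thus False using two_nz \<open>y \<noteq> 0\<close> by simp
    qed
    moreover have "{x. x^2 = t} = {y, -y}" using roots_square[of y] y by simp
    ultimately show ?thesis using True False by simp
  next
    case nt: False
    hence "{x. x^2 = t} = {}" by auto
    thus ?thesis using False nt by simp
  qed
qed

lemma card_roots_qc:
  fixes t :: 'a
  shows "(of_nat (card {x. x^2 = t}) :: 'b::ring_1) = 1 + qc t"
  unfolding card_roots qc_def by auto

lemma card_sqs: "2 * card (sqs :: 'a set) = CARD('a) - 1"
proof -
  have sub: "(\<lambda>x. x^2) ` (UNIV - {0::'a}) \<subseteq> sqs" by (auto simp: sqs_def)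
  have "card (UNIV - {0::'a}) = (\<Sum>s\<in>(sqs::'a set). card {x\<in>UNIV-{0::'a}. x^2 = s})"
    using sub sum.group[of "UNIV - {0::'a}" "sqs::'a set" "\<lambda>x. x^2" "\<lambda>_. 1::nat"]
    by (auto simp: sqs_def)
  also have "\<dots> = (\<Sum>s\<in>(sqs::'a set). 2)"
  proof (rule sum.cong)
    fix s :: 'a assume "s \<in> sqs"
    hence "{x\<in>UNIV-{0}. x^2 = s} = {x. x^2 = s}" "s \<noteq> 0" "\<exists>y. y^2 = s"
      by (auto simp: sqs_def)
    thus "card {x\<in>UNIV-{0}. x^2 = s} = 2" using card_roots[of s] by simp
  qed simp
  finally show ?thesis by simp
qed

lemma nonsq_mult:
  fixes n m :: 'a
  assumes "n \<noteq> 0" "m \<noteq> 0" "\<not> (\<exists>y. y^2 = n)" "\<not> (\<exists>y. y^2 = m)"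
  shows "\<exists>y. y^2 = n * m"
proof -
  define NS where "NS = {x::'a. x \<noteq> 0 \<and> \<not> (\<exists>y. y^2 = x)}"
  have "UNIV - {0} = (sqs::'a set) \<union> NS" "(sqs::'a set) \<inter> NS = {}" by (auto simp: sqs_def NS_def)
  hence "card (UNIV - {0::'a}) = card (sqs::'a set) + card NS" using card_Un_disjoint[of "sqs::'a set" NS] by simp
  hence cNS: "card NS = card (sqs::'a set)" using card_sqs by simp
  have inj: "inj_on (\<lambda>s. n * s) (sqs::'a set)" using assms(1) by (auto simp: inj_on_def)
  have sub: "(\<lambda>s. n * s) ` (sqs::'a set) \<subseteq> NS"
  proof
    fix z assume "z \<in> (\<lambda>s. n * s) ` sqs"
    then obtain s y where z: "z = n * s" "s \<noteq> 0" "y^2 = s" by (auto simp: sqs_def)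
    have "\<not> (\<exists>w. w^2 = z)"
    proof
      assume "\<exists>w. w^2 = z"
      then obtain w where "w^2 = n * s" using z by blast
      hence "(w / y)^2 = n" using z by (auto simp: power_divide)
      thus False using assms(3) by blast
    qed
    thus "z \<in> NS" using z assms(1) by (simp add: NS_def)
  qed
  have "card ((\<lambda>s. n * s) ` (sqs::'a set)) = card NS" using card_image[OF inj] cNS by simp
  hence "(\<lambda>s. n * s) ` (sqs::'a set) = NS" using sub by (metis card_subset_eq finite)
  moreover have "m \<in> NS" using assms by (simp add: NS_def)
  ultimately obtain s y where "m = n * s" "y^2 = s" by (auto simp: sqs_def)
  hence "(n * y)^2 = n * m" by (simp add: power_mult_distrib power2_eq_square)
  thus ?thesis by blast
qed

lemma qc_mult: "(qc (x * y :: 'a) :: 'b::ring_1) = qc x * qc y"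
proof (cases "x = 0 \<or> y = 0")
  case True thus ?thesis by (auto simp: qc_def)
next
  case False
  hence nz: "x \<noteq> 0" "y \<noteq> 0" "x * y \<noteq> 0" by auto
  consider "\<exists>a. a^2 = x" "\<exists>b. b^2 = y" | "\<exists>a. a^2 = x" "\<not>(\<exists>b. b^2 = y)"
    | "\<not>(\<exists>a. a^2 = x)" "\<exists>b. b^2 = y" | "\<not>(\<exists>a. a^2 = x)" "\<not>(\<exists>b. b^2 = y)" by blast
  thus ?thesis
  proof cases
    case 1
    then obtain a b where "a^2 = x" "b^2 = y" by blast
    hence "(a*b)^2 = x * y" by (simp add: power_mult_distrib)
    thus ?thesis using 1 nz by (auto simp: qc_def)
  next
    case 2
    then obtain a where a: "a^2 = x" by blast
    have "\<not> (\<exists>c. c^2 = x * y)"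
    proof
      assume "\<exists>c. c^2 = x * y"
      then obtain c where "c^2 = x * y" by blast
      hence "(c / a)^2 = y" using a nz by (auto simp: power_divide)
      thus False using 2 by blast
    qed
    thus ?thesis using 2 nz by (auto simp: qc_def)
  next
    case 3
    then obtain b where b: "b^2 = y" by blast
    have "\<not> (\<exists>c. c^2 = x * y)"
    proof
      assume "\<exists>c. c^2 = x * y"
      then obtain c where "c^2 = x * y" by blast
      hence "(c / b)^2 = x" using b nz by (auto simp: power_divide)
      thus False using 3 by blast
    qed
    thus ?thesis using 3 nz by (auto simp: qc_def)
  next
    case 4
    hence "\<exists>c. c^2 = x * y" using nonsq_mult nz by blast
    thus ?thesis using 4 nz by (auto simp: qc_def)
  qed
qed

lemma qc_sq: "x \<noteq> 0 \<Longrightarrow> (qc (x^2 :: 'a) :: 'b::ring_1) = 1"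
  by (auto simp: qc_def)

lemma qc_sq_val: "x \<noteq> 0 \<Longrightarrow> (qc (x :: 'a) :: 'b::ring_1) * qc x = 1"
  by (simp add: qc_def)

lemma qc_inverse: "(qc (inverse x :: 'a) :: 'b::ring_1) = qc x"
proof (cases "x = 0")
  case True thus ?thesis by simp
next
  case False
  have "inverse x = x * (inverse x)^2" using False by (simp add: power2_eq_square)
  hence "(qc (inverse x) :: 'b) = (qc x :: 'b) * (qc ((inverse x)^2) :: 'b)" by (metis qc_mult)
  moreover have "(qc ((inverse x)^2) :: 'b) = 1" using False qc_sq[of "inverse x"] by simp
  ultimately show ?thesis by simp
qed

lemma qc_pow_odd: "odd n \<Longrightarrow> (qc (x :: 'a) :: 'b::ring_1) ^ n = qc x"
  by (auto simp: qc_def power_0_left)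

lemma qc_pow_even: "x \<noteq> 0 \<Longrightarrow> even n \<Longrightarrow> (qc (x :: 'a) :: 'b::ring_1) ^ n = 1"
  by (auto simp: qc_def)

lemma sum_qc: "(\<Sum>t\<in>UNIV. (qc (t::'a) :: 'b::ring_1)) = 0"
proof -
  have "(\<Sum>t\<in>UNIV. (of_nat (card {x::'a. x^2 = t}) :: 'b)) = of_nat (\<Sum>t\<in>UNIV. card {x::'a. x^2 = t})"
    by simp
  also have "(\<Sum>t\<in>UNIV. card {x::'a. x^2 = t}) = CARD('a)"
    using sum.group[of "UNIV::'a set" UNIV "\<lambda>x. x^2" "\<lambda>_. 1::nat"] by simp
  finally have "(\<Sum>t\<in>UNIV. (1 + qc (t::'a) :: 'b)) = of_nat CARD('a)"
    by (simp add: card_roots_qc)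
  thus ?thesis by (simp add: sum.distrib)
qed

end


locale achar =
  fixes ch :: "'a::{field,finite} \<Rightarrow> complex"
  assumes ch_add: "ch (x + y) = ch x * ch y"
    and ch_norm: "cmod (ch x) = 1"
    and ch_nontriv: "ch 1 \<noteq> 1"
    and oddq: "odd CARD('a)"
begin

lemma two_nz': "(2::'a) \<noteq> 0" using two_nz[OF oddq] .

lemma ch_nz: "ch x \<noteq> 0" using ch_norm[of x] by auto

lemma ch_0: "ch 0 = 1"
proof -
  have "ch 0 = ch 0 * ch 0" using ch_add[of 0 0] by simp
  thus ?thesis using ch_nz[of 0] by (metis mult_cancel_left2)
qed

lemma ch_cnj: "cnj (ch x) = ch (- x)"
proof -
  have a: "ch x * ch (-x) = 1" using ch_add[of x "-x"] ch_0 by simp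
  have b: "ch x * cnj (ch x) = 1"
    using complex_norm_square[of "ch x"] ch_norm[of x] by simp
  from a b have "ch x * ch (-x) = ch x * cnj (ch x)" by simp
  thus ?thesis using ch_nz[of x] by simp
qed

lemma ch_diff: "ch (x - y) = ch x * cnj (ch y)"
  using ch_add[of x "-y"] ch_cnj[of y] by simp

lemma ch_sum: "ch (sum f I) = (\<Prod>i\<in>I. ch (f i))"
proof (cases "finite I")
  case True thus ?thesis
    by (induction I rule: finite_induct) (auto simp: ch_0 ch_add)
next
  case False thus ?thesis by (simp add: ch_0)
qed

lemma ch_orth: "(\<Sum>x\<in>UNIV. ch (a * x)) = (if a = 0 then of_nat CARD('a) else 0)"
proof (cases "a = 0")
  case True thus ?thesis by (simp add: ch_0)
next
  case False
  define S where "S = (\<Sum>x\<in>UNIV. ch x)"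
  have "(\<Sum>x\<in>UNIV. ch (a * x)) = S" unfolding S_def using sum_scale_univ[OF False, of ch] .
  moreover have "S = S * ch 1"
  proof -
    have "S = (\<Sum>x\<in>UNIV. ch (x + 1))" unfolding S_def by (rule sum_shift_univ[symmetric])
    also have "\<dots> = (\<Sum>x\<in>UNIV. ch x * ch 1)" by (simp add: ch_add)
    also have "\<dots> = S * ch 1" unfolding S_def by (simp add: sum_distrib_right)
    finally show ?thesis .
  qed
  hence "S = 0" using ch_nontriv by (metis mult_cancel_left2)
  ultimately show ?thesis using False by simp
qed

lemma ch_orth': "(\<Sum>x\<in>UNIV. ch (x * a)) = (if a = 0 then of_nat CARD('a) else 0)"
  using ch_orth[of a] by (simp add: mult.commute)

lemma sum_ch_inverse:
  "(\<Sum>s\<in>UNIV-{0}. ch (c * inverse s)) = (if c = 0 then of_nat CARD('a) else 0) - 1"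
proof -
  have "(\<Sum>s\<in>UNIV-{0}. ch (c * inverse s)) = (\<Sum>s\<in>UNIV-{0}. ch (c * s))"
    using sum_inverse_nonzero[of "\<lambda>s. ch (c * s)"] by simp
  also have "\<dots> = (\<Sum>s\<in>UNIV. ch (c * s)) - ch (c * 0)"
    by (simp add: sum_diff1)
  finally show ?thesis using ch_orth[of c] by (simp add: ch_0)
qed

definition G :: "'a \<Rightarrow> complex" where
  "G a = (\<Sum>x\<in>UNIV. ch (a * x^2))"

definition K :: "'a \<Rightarrow> complex" where
  "K c = (\<Sum>u\<in>UNIV. qc u * ch (c * u))"

lemma G_alt: "G a = (\<Sum>t\<in>UNIV. (1 + qc t) * ch (a * t))"
proof -
  have "G a = (\<Sum>t\<in>UNIV. \<Sum>x\<in>{x\<in>UNIV. x^2 = t}. ch (a * x^2))"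
    unfolding G_def using sum.group[of "UNIV::'a set" UNIV "\<lambda>x. x^2" "\<lambda>x. ch (a * x^2)"] by simp
  also have "\<dots> = (\<Sum>t\<in>UNIV. \<Sum>x\<in>{x. x^2 = t}. ch (a * t))"
    by (intro sum.cong) auto
  also have "\<dots> = (\<Sum>t\<in>UNIV. of_nat (card {x::'a. x^2 = t}) * ch (a * t))"
    by simp
  also have "\<dots> = (\<Sum>t\<in>UNIV. (1 + qc t) * ch (a * t))"
  proof (rule sum.cong[OF refl])
    fix t :: 'a
    have "(of_nat (card {x::'a. x^2 = t}) :: complex) = 1 + qc t" by (rule card_roots_qc[OF oddq])
    thus "of_nat (card {x::'a. x^2 = t}) * ch (a * t) = (1 + qc t) * ch (a * t)" by simp
  qed
  finally show ?thesis .
qed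

lemma G_K: "a \<noteq> 0 \<Longrightarrow> G a = K a"
proof -
  assume a: "a \<noteq> 0"
  have "G a = (\<Sum>t\<in>UNIV. ch (a * t)) + K a"
    unfolding G_alt K_def by (simp add: distrib_right sum.distrib)
  thus ?thesis using ch_orth[of a] a by simp
qed

lemma K_0: "K 0 = 0"
  unfolding K_def using sum_qc[OF oddq] by (simp add: ch_0)

lemma G_qc: "a \<noteq> 0 \<Longrightarrow> G a = qc a * G 1"
proof -
  assume a: "a \<noteq> 0"
  have ia: "inverse a \<noteq> 0" using a by simp
  have "G a = (\<Sum>t\<in>UNIV. qc t * ch (a * t))" using G_K[OF a] K_def by simp
  also have "\<dots> = (\<Sum>u\<in>UNIV. qc (inverse a * u) * ch (a * (inverse a * u)))"
    using sum_scale_univ[OF ia, of "\<lambda>t. qc t * ch (a * t)"] by simp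
  also have "\<dots> = (\<Sum>u\<in>UNIV. qc a * (qc u * ch u))"
  proof (intro sum.cong refl)
    fix u
    have "(qc (inverse a * u) :: complex) = qc (inverse a) * qc u" by (rule qc_mult[OF oddq])
    also have "(qc (inverse a) :: complex) = qc a" by (rule qc_inverse[OF oddq])
    finally have 1: "(qc (inverse a * u) :: complex) = qc a * qc u" .
    have 2: "a * (inverse a * u) = u" using a by simp
    show "qc (inverse a * u) * ch (a * (inverse a * u)) = qc a * (qc u * ch u)"
      unfolding 1 2 by simp
  qed
  also have "\<dots> = qc a * G 1"
    using G_K[of 1] by (simp add: K_def sum_distrib_left)
  finally show ?thesis .
qed

lemma G_neg: "a \<noteq> 0 \<Longrightarrow> G a * G (-a) = of_nat CARD('a)"
proof -
  assume a: "a \<noteq> 0"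
  have "G a * G (-a) = (\<Sum>y\<in>UNIV. \<Sum>x\<in>UNIV. ch (a * x^2) * ch (-a * y^2))"
    unfolding G_def sum_product by (rule sum.swap)
  also have "\<dots> = (\<Sum>y\<in>UNIV. \<Sum>x\<in>UNIV. ch (a * (x + y)^2) * ch (-a * y^2))"
  proof (rule sum.cong[OF refl])
    fix y
    show "(\<Sum>x\<in>UNIV. ch (a * x^2) * ch (-a * y^2)) = (\<Sum>x\<in>UNIV. ch (a * (x + y)^2) * ch (-a * y^2))"
      by (rule sum_shift_univ[symmetric, of "\<lambda>x. ch (a * x^2) * ch (-a * y^2)" y])
  qed
  also have "\<dots> = (\<Sum>y\<in>UNIV. \<Sum>x\<in>UNIV. ch (a * x^2) * ch ((2 * a * x) * y))"
  proof (intro sum.cong refl)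
    fix x y
    have "a * (x + y)^2 + (-a * y^2) = a * x^2 + (2 * a * x) * y"
      by (simp add: power2_eq_square algebra_simps)
    thus "ch (a * (x + y)^2) * ch (-a * y^2) = ch (a * x^2) * ch ((2 * a * x) * y)"
      by (metis ch_add)
  qed
  also have "\<dots> = (\<Sum>x\<in>UNIV. ch (a * x^2) * (\<Sum>y\<in>UNIV. ch ((2 * a * x) * y)))"
    by (subst sum.swap) (simp add: sum_distrib_left)
  also have "\<dots> = (\<Sum>x\<in>UNIV. if x = (0::'a) then of_nat CARD('a) else 0)"
  proof (rule sum.cong[OF refl])
    fix x :: 'a
    have "2 * a * x = 0 \<longleftrightarrow> x = 0" using a two_nz' by simp
    thus "ch (a * x^2) * (\<Sum>y\<in>UNIV. ch ((2 * a * x) * y)) = (if x = 0 then of_nat CARD('a) else 0)"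
      using ch_orth[of "2 * a * x"] by (simp add: ch_0)
  qed
  also have "\<dots> = of_nat CARD('a)" by simp
  finally show ?thesis .
qed

lemma G1_sq: "G 1 ^ 2 = qc (-1::'a) * of_nat CARD('a)"
proof -
  have "G 1 * G (-1) = of_nat CARD('a)" using G_neg[of 1] by simp
  hence "qc (-1::'a) * G 1 ^ 2 = of_nat CARD('a)"
    using G_qc[of "-1"] by (simp add: power2_eq_square algebra_simps)
  hence "qc (-1::'a) * (qc (-1::'a) * G 1 ^ 2) = qc (-1::'a) * of_nat CARD('a)" by simp
  moreover have "qc (-1::'a) * qc (-1::'a) = (1::complex)" using qc_sq_val[OF oddq, of "-1::'a"] by simp
  ultimately show ?thesis by (simp add: mult.assoc[symmetric])
qed

lemma G_mult: "a \<noteq> 0 \<Longrightarrow> b \<noteq> 0 \<Longrightarrow> G a * G b = qc (-(a * b)) * of_nat CARD('a)"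
proof -
  assume a: "a \<noteq> 0" and b: "b \<noteq> 0"
  have "G a * G b = qc a * qc b * G 1 ^ 2" using G_qc[OF a] G_qc[OF b] by (simp add: power2_eq_square)
  also have "\<dots> = qc a * qc b * qc (-1::'a) * of_nat CARD('a)" using G1_sq by simp
  also have "qc a * qc b * qc (-1::'a) = (qc (-(a * b)) :: complex)"
  proof -
    have "(qc (-(a*b)) :: complex) = qc ((a * b) * (-1))" by simp
    also have "\<dots> = qc (a*b) * qc (-1::'a)" by (rule qc_mult[OF oddq])
    also have "\<dots> = qc a * qc b * qc (-1::'a)" by (simp add: qc_mult[OF oddq])
    finally show ?thesis by simp
  qed
  finally show ?thesis .
qed

lemma G_pow_nz: "a \<noteq> 0 \<Longrightarrow> G a \<noteq> 0"
  using G_neg[of a] by auto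

lemma complete_square:
  assumes a: "a \<noteq> 0"
  shows "(\<Sum>x\<in>UNIV. ch (a * x^2 + b * x)) = ch (- (b^2) / (4 * a)) * G a"
proof -
  define c where "c = b / (2 * a)"
  have 4: "(4::'a) \<noteq> 0" using two_nz' by (metis mult_2_right numeral_Bit0 numeral_times_numeral mult_eq_0_iff)
  have c1: "2 * a * c = b" unfolding c_def using a two_nz' by simp
  have c2: "a * c^2 = b^2 / (4 * a)" unfolding c_def using a two_nz' 4
    by (simp add: power2_eq_square field_simps)
  have eq: "a * x^2 + b * x = a * (x + c)^2 + (- (b^2) / (4 * a))" for x
  proof -
    have "a * (x + c)^2 = a * x^2 + (2 * a * c) * x + a * c^2"
      by (simp add: power2_eq_square algebra_simps)
    thus ?thesis unfolding c1 c2 by simp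
  qed
  have "(\<Sum>x\<in>UNIV. ch (a * x^2 + b * x)) = (\<Sum>x\<in>UNIV. ch (a * (x + c)^2) * ch (- (b^2) / (4 * a)))"
    by (simp only: eq ch_add)
  also have "\<dots> = (\<Sum>x\<in>UNIV. ch (a * x^2) * ch (- (b^2) / (4 * a)))"
    by (rule sum_shift_univ[of "\<lambda>x. ch (a * x^2) * ch (- (b^2) / (4 * a))"])
  also have "\<dots> = ch (- (b^2) / (4 * a)) * G a"
    unfolding G_def by (simp add: sum_distrib_right mult.commute)
  finally show ?thesis .
qed

lemma G_cnj: "cnj (G a) = G (-a)"
  unfolding G_def by (simp add: ch_cnj)

lemma norm_G_sq: "a \<noteq> 0 \<Longrightarrow> cmod (G a) ^ 2 = real CARD('a)"
proof -
  assume a: "a \<noteq> 0"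
  have "complex_of_real (cmod (G a) ^ 2) = G a * cnj (G a)" by (rule complex_norm_square)
  also have "\<dots> = of_nat CARD('a)" using G_cnj G_neg[OF a] by simp
  finally show ?thesis by (metis of_real_eq_iff of_real_of_nat_eq)
qed

lemma norm_K: "cmod (K c) \<le> sqrt (real CARD('a))"
proof (cases "c = 0")
  case True thus ?thesis by (simp add: K_0)
next
  case False
  have "cmod (K c) ^ 2 = real CARD('a)" using norm_G_sq[OF False] G_K[OF False] by simp
  thus ?thesis by (metis norm_ge_zero real_sqrt_abs real_sqrt_power abs_of_nonneg order_refl
       power2_eq_square real_sqrt_mult_self)
qed

lemma sum_qc_ch_inverse:
  "(\<Sum>s\<in>UNIV-{0}. qc s * ch (c * inverse s)) = K c"
proof -
  have "(\<Sum>s\<in>UNIV-{0}. qc s * ch (c * inverse s)) = (\<Sum>s\<in>UNIV-{0}. qc (inverse s) * ch (c * inverse s))"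
    by (simp add: qc_inverse[OF oddq])
  also have "\<dots> = (\<Sum>s\<in>UNIV-{0}. qc s * ch (c * s))"
    using sum_inverse_nonzero[of "\<lambda>s. qc s * ch (c * s)"] by simp
  also have "\<dots> = K c"
  proof -
    have "qc (0::'a) = (0::complex)" by (simp add: qc_def)
    thus ?thesis unfolding K_def by (simp add: sum_diff1)
  qed
  finally show ?thesis .
qed

end


definition dotp :: "'a::comm_ring_1 ^ 'n \<Rightarrow> 'a ^ 'n \<Rightarrow> 'a" where
  "dotp u v = (\<Sum>i\<in>UNIV. u $ i * v $ i)"

lemma dotp_diff: "dotp u (v - w) = dotp u v - dotp u w"
  unfolding dotp_def by (simp add: algebra_simps sum_subtractf)

lemma prod_sum_vec:
  fixes f :: "'n::finite \<Rightarrow> 'a::finite \<Rightarrow> 'c::comm_semiring_1"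
  shows "(\<Prod>i\<in>UNIV. \<Sum>a\<in>UNIV. f i a) = (\<Sum>\<xi>\<in>(UNIV :: ('a ^ 'n) set). \<Prod>i\<in>UNIV. f i (\<xi> $ i))"
proof -
  have "(\<Prod>i\<in>UNIV. \<Sum>a\<in>UNIV. f i a) = (\<Sum>g\<in>PiE UNIV (\<lambda>_. UNIV). \<Prod>i\<in>UNIV. f i (g i))"
    by (rule prod_sum_PiE) auto
  also have "\<dots> = (\<Sum>g\<in>UNIV. \<Prod>i\<in>UNIV. f i (g i))" by simp
  also have "\<dots> = (\<Sum>\<xi>\<in>(UNIV :: ('a ^ 'n) set). \<Prod>i\<in>UNIV. f i (\<xi> $ i))"
  proof -
    have "bij_betw vec_nth (UNIV :: ('a ^ 'n) set) UNIV"
      by (intro bij_betwI[of _ _ _ vec_lambda]) (auto simp: vec_eq_iff)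
    thus ?thesis by (rule sum.reindex_bij_betw[symmetric])
  qed
  finally show ?thesis .
qed

context achar
begin

lemma ch_dotp: "ch (dotp u v) = (\<Prod>i\<in>UNIV. ch (u $ i * v $ i))"
  unfolding dotp_def by (rule ch_sum)

lemma sum_ch_dotp:
  "(\<Sum>\<xi>\<in>(UNIV :: ('a ^ 'n::finite) set). ch (dotp \<xi> w)) = (if w = 0 then of_nat CARD('a) ^ CARD('n) else 0)"
proof -
  have "(\<Sum>\<xi>\<in>(UNIV :: ('a ^ 'n) set). ch (dotp \<xi> w)) = (\<Prod>i\<in>UNIV. \<Sum>a\<in>UNIV. ch (a * w $ i))"
    unfolding ch_dotp by (rule prod_sum_vec[symmetric])
  also have "\<dots> = (\<Prod>i\<in>(UNIV::'n set). if w $ i = 0 then of_nat CARD('a) else 0)"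
    by (simp add: ch_orth')
  also have "\<dots> = (if w = 0 then of_nat CARD('a) ^ CARD('n) else 0)"
  proof (cases "w = 0")
    case True thus ?thesis by simp
  next
    case False
    then obtain i where "w $ i \<noteq> 0" by (auto simp: vec_eq_iff)
    thus ?thesis using False by (intro trans[OF prod_zero]) auto
  qed
  finally show ?thesis .
qed

definition Eh :: "('a ^ 'n::finite) set \<Rightarrow> 'a ^ 'n \<Rightarrow> complex" where
  "Eh E \<xi> = (\<Sum>x\<in>E. ch (dotp \<xi> x))"

definition PP :: "('a ^ 'n::finite) set \<Rightarrow> 'a ^ 'n \<Rightarrow> complex" where
  "PP E \<xi> = Eh E \<xi> * cnj (Eh E \<xi>)"

lemma PP_double: "PP E \<xi> = (\<Sum>x\<in>E. \<Sum>y\<in>E. ch (dotp \<xi> (x - y)))"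
  unfolding PP_def Eh_def by (simp add: sum_product dotp_diff ch_diff)

lemma PP_real: "PP E \<xi> = complex_of_real (cmod (Eh E \<xi>) ^ 2)"
  unfolding PP_def by (rule complex_norm_square[symmetric])

lemma plancherel:
  fixes E :: "('a ^ 'n::finite) set"
  shows "(\<Sum>\<xi>\<in>UNIV. PP E \<xi>) = of_nat CARD('a) ^ CARD('n) * of_nat (card E)"
proof -
  have "(\<Sum>\<xi>\<in>UNIV. PP E \<xi>) = (\<Sum>x\<in>E. \<Sum>y\<in>E. \<Sum>\<xi>\<in>UNIV. ch (dotp \<xi> (x - y)))"
    unfolding PP_double by (simp add: sum.swap[of _ UNIV])
  also have "\<dots> = (\<Sum>x\<in>E. \<Sum>y\<in>E. if x = y then of_nat CARD('a) ^ CARD('n) else 0)"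
    by (simp add: sum_ch_dotp)
  also have "\<dots> = (\<Sum>x\<in>E. of_nat CARD('a) ^ CARD('n))"
    by (intro sum.cong refl) (simp add: sum.delta)
  finally show ?thesis by (simp add: mult.commute)
qed

lemma expand_1d:
  assumes s: "s \<noteq> 0"
  shows "of_nat CARD('a) * ch (s * t^2) = G s * (\<Sum>a\<in>UNIV. ch (- (a^2) / (4 * s)) * ch (a * t))"
proof -
  have 4: "(4::'a) \<noteq> 0" using two_nz' by (metis mult_2_right numeral_Bit0 numeral_times_numeral mult_eq_0_iff)
  define b where "b = - 1 / (4 * s)"
  have b0: "b \<noteq> 0" unfolding b_def using s 4 by simp
  have "(\<Sum>a\<in>UNIV. ch (- (a^2) / (4 * s)) * ch (a * t)) = (\<Sum>a\<in>UNIV. ch (b * a^2 + t * a))"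
    unfolding b_def by (intro sum.cong refl) (simp add: ch_add[symmetric] mult.commute)
  also have "\<dots> = ch (- (t^2) / (4 * b)) * G b" by (rule complete_square[OF b0])
  also have "- (t^2) / (4 * b) = s * t^2" unfolding b_def using s 4 by (simp add: field_simps)
  finally have 1: "(\<Sum>a\<in>UNIV. ch (- (a^2) / (4 * s)) * ch (a * t)) = ch (s * t^2) * G b" .
  have "G s * G b = qc (- (s * b)) * of_nat CARD('a)" by (rule G_mult[OF s b0])
  also have "- (s * b) = (inverse 2)^2" unfolding b_def using s 4 two_nz' by (simp add: field_simps power2_eq_square)
  also have "(qc ((inverse 2)^2 :: 'a) :: complex) = 1" using qc_sq[OF oddq, of "inverse 2"] two_nz' by simp
  finally have 2: "G s * G b = of_nat CARD('a)" by simp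
  show ?thesis unfolding 1 using 2 by (simp add: mult.commute mult.left_commute)
qed

lemma sqnorm_expand:
  assumes s: "s \<noteq> 0"
  shows "of_nat CARD('a) ^ CARD('n) * ch (s * sqnorm (v :: 'a ^ 'n::finite))
       = G s ^ CARD('n) * (\<Sum>\<xi>\<in>UNIV. ch (- sqnorm \<xi> / (4 * s)) * ch (dotp \<xi> v))"
proof -
  have "of_nat CARD('a) ^ CARD('n) * ch (s * sqnorm v) = (\<Prod>i\<in>(UNIV::'n set). of_nat CARD('a) * ch (s * (v $ i)^2))"
    unfolding sqnorm_def by (simp add: sum_distrib_left ch_sum prod.distrib)
  also have "\<dots> = (\<Prod>i\<in>(UNIV::'n set). G s * (\<Sum>a\<in>UNIV. ch (- (a^2) / (4 * s)) * ch (a * v $ i)))"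
    by (simp add: expand_1d[OF s])
  also have "\<dots> = G s ^ CARD('n) * (\<Prod>i\<in>(UNIV::'n set). \<Sum>a\<in>UNIV. ch (- (a^2) / (4 * s)) * ch (a * v $ i))"
    by (simp add: prod.distrib)
  also have "(\<Prod>i\<in>(UNIV::'n set). \<Sum>a\<in>UNIV. ch (- (a^2) / (4 * s)) * ch (a * v $ i))
      = (\<Sum>\<xi>\<in>(UNIV :: ('a ^ 'n) set). \<Prod>i\<in>UNIV. ch (- ((\<xi> $ i)^2) / (4 * s)) * ch (\<xi> $ i * v $ i))"
    by (rule prod_sum_vec)
  also have "\<dots> = (\<Sum>\<xi>\<in>UNIV. ch (- sqnorm \<xi> / (4 * s)) * ch (dotp \<xi> v))"
  proof (rule sum.cong[OF refl])
    fix \<xi> :: "'a ^ 'n"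
    have "- sqnorm \<xi> / (4 * s) = (\<Sum>i\<in>UNIV. - ((\<xi> $ i)^2) / (4 * s))"
      unfolding sqnorm_def by (simp add: sum_divide_distrib sum_negf)
    hence "ch (- sqnorm \<xi> / (4 * s)) = (\<Prod>i\<in>UNIV. ch (- ((\<xi> $ i)^2) / (4 * s)))"
      by (simp add: ch_sum)
    thus "(\<Prod>i\<in>UNIV. ch (- ((\<xi> $ i)^2) / (4 * s)) * ch (\<xi> $ i * v $ i)) = ch (- sqnorm \<xi> / (4 * s)) * ch (dotp \<xi> v)"
      by (simp add: prod.distrib ch_dotp)
  qed
  finally show ?thesis .
qed

definition A :: "('a ^ 'n::finite) set \<Rightarrow> 'a \<Rightarrow> complex" where
  "A E s = (\<Sum>x\<in>E. \<Sum>y\<in>E. ch (s * sqnorm (x - y)))"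

lemma A_0: "A E 0 = of_nat (card E) ^ 2"
  unfolding A_def by (simp add: ch_0 power2_eq_square)

lemma A_expand:
  fixes E :: "('a ^ 'n::finite) set"
  assumes s: "s \<noteq> 0"
  shows "of_nat CARD('a) ^ CARD('n) * A E s = G s ^ CARD('n) * (\<Sum>\<xi>\<in>UNIV. ch (- sqnorm \<xi> / (4 * s)) * PP E \<xi>)"
proof -
  have "of_nat CARD('a) ^ CARD('n) * A E s
      = (\<Sum>x\<in>E. \<Sum>y\<in>E. G s ^ CARD('n) * (\<Sum>\<xi>\<in>UNIV. ch (- sqnorm \<xi> / (4 * s)) * ch (dotp \<xi> (x - y))))"
    unfolding A_def by (simp add: sum_distrib_left sqnorm_expand[OF s])
  also have "\<dots> = G s ^ CARD('n) * (\<Sum>\<xi>\<in>UNIV. ch (- sqnorm \<xi> / (4 * s)) * (\<Sum>x\<in>E. \<Sum>y\<in>E. ch (dotp \<xi> (x - y))))"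
    by (simp add: sum_distrib_left sum.swap[of _ UNIV] mult.assoc)
  finally show ?thesis by (simp add: PP_double)
qed

end


lemma swap4:
  fixes f g :: "'s \<Rightarrow> 'v \<Rightarrow> 'v \<Rightarrow> 'c::comm_semiring_1"
  shows "(\<Sum>x\<in>E. \<Sum>x'\<in>E. \<Sum>y\<in>E. \<Sum>y'\<in>E. \<Sum>\<sigma>\<in>S. f \<sigma> x x' * g \<sigma> y y')
       = (\<Sum>\<sigma>\<in>S. (\<Sum>x\<in>E. \<Sum>x'\<in>E. f \<sigma> x x') * (\<Sum>y\<in>E. \<Sum>y'\<in>E. g \<sigma> y y'))"
proof -
  have "(\<Sum>x\<in>E. \<Sum>x'\<in>E. \<Sum>y\<in>E. \<Sum>y'\<in>E. \<Sum>\<sigma>\<in>S. f \<sigma> x x' * g \<sigma> y y')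
      = (\<Sum>x\<in>E. \<Sum>x'\<in>E. \<Sum>y\<in>E. \<Sum>\<sigma>\<in>S. \<Sum>y'\<in>E. f \<sigma> x x' * g \<sigma> y y')"
    by (rule sum.cong[OF refl], rule sum.cong[OF refl], rule sum.cong[OF refl], rule sum.swap)
  also have "\<dots> = (\<Sum>x\<in>E. \<Sum>x'\<in>E. \<Sum>\<sigma>\<in>S. \<Sum>y\<in>E. \<Sum>y'\<in>E. f \<sigma> x x' * g \<sigma> y y')"
    by (rule sum.cong[OF refl], rule sum.cong[OF refl], rule sum.swap)
  also have "\<dots> = (\<Sum>x\<in>E. \<Sum>\<sigma>\<in>S. \<Sum>x'\<in>E. \<Sum>y\<in>E. \<Sum>y'\<in>E. f \<sigma> x x' * g \<sigma> y y')"
    by (rule sum.cong[OF refl], rule sum.swap)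
  also have "\<dots> = (\<Sum>\<sigma>\<in>S. \<Sum>x\<in>E. \<Sum>x'\<in>E. \<Sum>y\<in>E. \<Sum>y'\<in>E. f \<sigma> x x' * g \<sigma> y y')"
    by (rule sum.swap)
  also have "\<dots> = (\<Sum>\<sigma>\<in>S. \<Sum>x\<in>E. \<Sum>x'\<in>E. f \<sigma> x x' * (\<Sum>y\<in>E. \<Sum>y'\<in>E. g \<sigma> y y'))"
    by (simp only: sum_distrib_left)
  also have "\<dots> = (\<Sum>\<sigma>\<in>S. (\<Sum>x\<in>E. \<Sum>x'\<in>E. f \<sigma> x x') * (\<Sum>y\<in>E. \<Sum>y'\<in>E. g \<sigma> y y'))"
    by (simp only: sum_distrib_right)
  finally show ?thesis .
qed

lemma swap2:
  fixes f :: "'s \<Rightarrow> 'v \<Rightarrow> 'v \<Rightarrow> 'c::comm_monoid_add"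
  shows "(\<Sum>x\<in>E. \<Sum>y\<in>E. \<Sum>\<sigma>\<in>S. f \<sigma> x y) = (\<Sum>\<sigma>\<in>S. \<Sum>x\<in>E. \<Sum>y\<in>E. f \<sigma> x y)"
proof -
  have "(\<Sum>x\<in>E. \<Sum>y\<in>E. \<Sum>\<sigma>\<in>S. f \<sigma> x y) = (\<Sum>x\<in>E. \<Sum>\<sigma>\<in>S. \<Sum>y\<in>E. f \<sigma> x y)"
    by (rule sum.cong[OF refl], rule sum.swap)
  also have "\<dots> = (\<Sum>\<sigma>\<in>S. \<Sum>x\<in>E. \<Sum>y\<in>E. f \<sigma> x y)"
    by (rule sum.swap)
  finally show ?thesis .
qed

lemma of_real_ind: "complex_of_real (if P then 1 else 0) = (if P then 1 else 0)"
  by simp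

definition N0 :: "('a::field ^ 'n::finite) set \<Rightarrow> real" where
  "N0 E = (\<Sum>x\<in>E. \<Sum>y\<in>E. if sqnorm (x - y) = 0 then 1 else 0)"

definition Tot :: "('a::field ^ 'n::finite) set \<Rightarrow> 'a \<Rightarrow> real" where
  "Tot E r = (\<Sum>x\<in>E. \<Sum>x'\<in>E. \<Sum>y\<in>E. \<Sum>y'\<in>E.
      if sqnorm (y - y') = r * sqnorm (x - x') then 1 else 0)"

definition Tz :: "('a::field ^ 'n::finite) set \<Rightarrow> 'a \<Rightarrow> real" where
  "Tz E r = (\<Sum>x\<in>E. \<Sum>x'\<in>E. \<Sum>y\<in>E. \<Sum>y'\<in>E.
      if sqnorm (y - y') = r * sqnorm (x - x') \<and> sqnorm (x - x') \<noteq> 0 then 1 else 0)"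

lemma Tz_eq:
  fixes E :: "('a::field ^ 'n::finite) set"
  assumes r: "r \<noteq> 0"
  shows "Tz E r = Tot E r - N0 E ^ 2"
proof -
  have "N0 E ^ 2 = (\<Sum>x\<in>E. \<Sum>x'\<in>E. \<Sum>y\<in>E. \<Sum>y'\<in>E.
      (if sqnorm (x - x') = 0 then 1 else 0) * (if sqnorm (y - y') = 0 then (1::real) else 0))"
  proof -
    have "N0 E ^ 2 = (\<Sum>x\<in>E. \<Sum>x'\<in>E. (if sqnorm (x - x') = 0 then 1 else 0) * N0 E)"
      unfolding power2_eq_square by (subst (1) N0_def) (simp only: sum_distrib_right)
    thus ?thesis unfolding N0_def by (simp only: sum_distrib_left)
  qed
  hence "Tot E r - N0 E ^ 2 = (\<Sum>x\<in>E. \<Sum>x'\<in>E. \<Sum>y\<in>E. \<Sum>y'\<in>E.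
      (if sqnorm (y - y') = r * sqnorm (x - x') then 1 else 0) -
      (if sqnorm (x - x') = 0 then 1 else 0) * (if sqnorm (y - y') = 0 then (1::real) else 0))"
    unfolding Tot_def by (simp add: sum_subtractf)
  also have "\<dots> = Tz E r"
    unfolding Tz_def by (intro sum.cong refl) (use r in auto)
  finally show ?thesis by simp
qed

context achar
begin

lemma ind_ch: "of_nat CARD('a) * (if c = 0 then 1 else 0) = (\<Sum>\<sigma>\<in>UNIV. ch (\<sigma> * c))"
  by (simp add: ch_orth')

lemma N0_count:
  fixes E :: "('a ^ 'n::finite) set"
  shows "of_nat CARD('a) * complex_of_real (N0 E) = (\<Sum>\<sigma>\<in>UNIV. A E \<sigma>)"
proof -
  have "complex_of_real (N0 E) = (\<Sum>x\<in>E. \<Sum>y\<in>E. if sqnorm (x - y) = 0 then 1 else 0)"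
    unfolding N0_def by (simp add: of_real_ind)
  hence "of_nat CARD('a) * complex_of_real (N0 E)
      = (\<Sum>x\<in>E. \<Sum>y\<in>E. of_nat CARD('a) * (if sqnorm (x - y) = 0 then 1 else 0))"
    by (simp only: sum_distrib_left)
  also have "\<dots> = (\<Sum>x\<in>E. \<Sum>y\<in>E. \<Sum>\<sigma>\<in>UNIV. ch (\<sigma> * sqnorm (x - y)))"
    by (simp only: ind_ch)
  also have "\<dots> = (\<Sum>\<sigma>\<in>UNIV. A E \<sigma>)"
    unfolding A_def by (rule swap2)
  finally show ?thesis .
qed

lemma Tot_count:
  fixes E :: "('a ^ 'n::finite) set"
  shows "of_nat CARD('a) * complex_of_real (Tot E r) = (\<Sum>\<sigma>\<in>UNIV. A E (- (\<sigma> * r)) * A E \<sigma>)"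
proof -
  have "complex_of_real (Tot E r) = (\<Sum>x\<in>E. \<Sum>x'\<in>E. \<Sum>y\<in>E. \<Sum>y'\<in>E.
           (if sqnorm (y - y') - r * sqnorm (x - x') = 0 then 1 else 0))"
    unfolding Tot_def by (simp add: of_real_ind)
  hence "of_nat CARD('a) * complex_of_real (Tot E r)
      = (\<Sum>x\<in>E. \<Sum>x'\<in>E. \<Sum>y\<in>E. \<Sum>y'\<in>E. of_nat CARD('a) *
           (if sqnorm (y - y') - r * sqnorm (x - x') = 0 then 1 else 0))"
    by (simp only: sum_distrib_left)
  also have "\<dots> = (\<Sum>x\<in>E. \<Sum>x'\<in>E. \<Sum>y\<in>E. \<Sum>y'\<in>E. \<Sum>\<sigma>\<in>UNIV.
          ch (- (\<sigma> * r) * sqnorm (x - x')) * ch (\<sigma> * sqnorm (y - y')))"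
  proof -
    have "ch (\<sigma> * (sqnorm (y - y') - r * sqnorm (x - x'))) =
          ch (- (\<sigma> * r) * sqnorm (x - x')) * ch (\<sigma> * sqnorm (y - y'))" for x x' y y' :: "'a ^ 'n"
      and \<sigma> :: 'a
    proof -
      have "\<sigma> * (sqnorm (y - y') - r * sqnorm (x - x')) = - (\<sigma> * r) * sqnorm (x - x') + \<sigma> * sqnorm (y - y')"
        by (simp add: algebra_simps)
      thus ?thesis by (simp only: ch_add)
    qed
    thus ?thesis by (simp only: ind_ch)
  qed
  also have "\<dots> = (\<Sum>\<sigma>\<in>UNIV. A E (- (\<sigma> * r)) * A E \<sigma>)"
    unfolding A_def by (rule swap4)
  finally show ?thesis .
qed

end


lemma qc_complex: "(qc x :: complex) = complex_of_real (qc x)"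
  by (simp add: qc_def)

context achar
begin

lemma four_nz: "(4::'a) \<noteq> 0"
  using two_nz' by (metis mult_2_right numeral_Bit0 numeral_times_numeral mult_eq_0_iff)

lemma GG_pow:
  assumes s: "\<sigma> \<noteq> 0" and r: "r \<noteq> 0" and qr: "(qc r :: complex) ^ CARD('n::finite) = 1"
  shows "G (- (\<sigma> * r)) ^ CARD('n) * G \<sigma> ^ CARD('n) = of_nat CARD('a) ^ CARD('n)"
proof -
  have "G (- (\<sigma> * r)) * G \<sigma> = qc (- (- (\<sigma> * r) * \<sigma>)) * of_nat CARD('a)"
    using G_mult s r by simp
  also have "- (- (\<sigma> * r) * \<sigma>) = r * \<sigma>^2" by (simp add: power2_eq_square algebra_simps)
  also have "(qc (r * \<sigma>^2) :: complex) = qc r"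
  proof -
    have "(qc (r * \<sigma>^2) :: complex) = qc r * qc (\<sigma>^2)" by (rule qc_mult[OF oddq])
    moreover have "(qc (\<sigma>^2) :: complex) = 1" by (rule qc_sq[OF oddq s])
    ultimately show ?thesis by simp
  qed
  finally have "G (- (\<sigma> * r)) * G \<sigma> = qc r * of_nat CARD('a)" .
  hence "(G (- (\<sigma> * r)) * G \<sigma>) ^ CARD('n) = (qc r) ^ CARD('n) * of_nat CARD('a) ^ CARD('n)"
    by (simp add: power_mult_distrib)
  thus ?thesis using qr by (simp add: power_mult_distrib)
qed

lemma AA_expand:
  fixes E :: "('a ^ 'n::finite) set"
  assumes s: "\<sigma> \<noteq> 0" and r: "r \<noteq> 0" and qr: "(qc r :: complex) ^ CARD('n) = 1"
  shows "of_nat CARD('a) ^ CARD('n) * of_nat CARD('a) ^ CARD('n) * (A E (- (\<sigma> * r)) * A E \<sigma>)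
    = of_nat CARD('a) ^ CARD('n) * (\<Sum>\<xi>\<in>UNIV. \<Sum>\<eta>\<in>UNIV.
        ch (((sqnorm \<xi> / r - sqnorm \<eta>) / 4) * inverse \<sigma>) * (PP E \<xi> * PP E \<eta>))"
proof -
  have s': "- (\<sigma> * r) \<noteq> 0" using s r by simp
  have "of_nat CARD('a) ^ CARD('n) * of_nat CARD('a) ^ CARD('n) * (A E (- (\<sigma> * r)) * A E \<sigma>)
      = (of_nat CARD('a) ^ CARD('n) * A E (- (\<sigma> * r))) * (of_nat CARD('a) ^ CARD('n) * A E \<sigma>)"
    by (simp add: algebra_simps)
  also have "\<dots> = (G (- (\<sigma> * r)) ^ CARD('n) * G \<sigma> ^ CARD('n)) *
     ((\<Sum>\<xi>\<in>UNIV. ch (- sqnorm \<xi> / (4 * (- (\<sigma> * r)))) * PP E \<xi>) *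
      (\<Sum>\<eta>\<in>UNIV. ch (- sqnorm \<eta> / (4 * \<sigma>)) * PP E \<eta>))"
    unfolding A_expand[OF s'] A_expand[OF s] by (simp add: algebra_simps)
  also have "G (- (\<sigma> * r)) ^ CARD('n) * G \<sigma> ^ CARD('n) = of_nat CARD('a) ^ CARD('n)"
    by (rule GG_pow[OF s r qr])
  also have "(\<Sum>\<xi>\<in>UNIV. ch (- sqnorm \<xi> / (4 * (- (\<sigma> * r)))) * PP E \<xi>) *
      (\<Sum>\<eta>\<in>UNIV. ch (- sqnorm \<eta> / (4 * \<sigma>)) * PP E \<eta>)
      = (\<Sum>\<xi>\<in>UNIV. \<Sum>\<eta>\<in>UNIV.
        ch (((sqnorm \<xi> / r - sqnorm \<eta>) / 4) * inverse \<sigma>) * (PP E \<xi> * PP E \<eta>))"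
    unfolding sum_product
  proof (intro sum.cong refl)
    fix \<xi> \<eta> :: "'a ^ 'n"
    have "- sqnorm \<xi> / (4 * (- (\<sigma> * r))) + - sqnorm \<eta> / (4 * \<sigma>) = ((sqnorm \<xi> / r - sqnorm \<eta>) / 4) * inverse \<sigma>"
      using s r four_nz by (simp add: field_simps)
    hence "ch (- sqnorm \<xi> / (4 * (- (\<sigma> * r)))) * ch (- sqnorm \<eta> / (4 * \<sigma>)) = ch (((sqnorm \<xi> / r - sqnorm \<eta>) / 4) * inverse \<sigma>)"
      by (metis ch_add)
    thus "ch (- sqnorm \<xi> / (4 * - (\<sigma> * r))) * PP E \<xi> * (ch (- sqnorm \<eta> / (4 * \<sigma>)) * PP E \<eta>) =
         ch ((sqnorm \<xi> / r - sqnorm \<eta>) / 4 * inverse \<sigma>) * (PP E \<xi> * PP E \<eta>)"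
      by (simp add: algebra_simps)
  qed
  finally show ?thesis .
qed

definition Wc :: "('a ^ 'n::finite) set \<Rightarrow> 'a \<Rightarrow> complex" where
  "Wc E r = (\<Sum>\<xi>\<in>UNIV. \<Sum>\<eta>\<in>UNIV. if sqnorm \<xi> = r * sqnorm \<eta> then PP E \<xi> * PP E \<eta> else 0)"

lemma sum_AA:
  fixes E :: "('a ^ 'n::finite) set"
  assumes r: "r \<noteq> 0" and qr: "(qc r :: complex) ^ CARD('n) = 1"
  shows "of_nat CARD('a) ^ CARD('n) * of_nat CARD('a) ^ CARD('n) * (\<Sum>\<sigma>\<in>UNIV-{0}. A E (- (\<sigma> * r)) * A E \<sigma>)
    = of_nat CARD('a) ^ CARD('n) * (of_nat CARD('a) * Wc E r - (of_nat CARD('a) ^ CARD('n) * of_nat (card E))^2)"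
proof -
  let ?Q = "of_nat CARD('a) ^ CARD('n) :: complex"
  have "?Q * ?Q * (\<Sum>\<sigma>\<in>UNIV-{0}. A E (- (\<sigma> * r)) * A E \<sigma>)
     = (\<Sum>\<sigma>\<in>UNIV-{0}. ?Q * ?Q * (A E (- (\<sigma> * r)) * A E \<sigma>))"
    by (simp add: sum_distrib_left)
  also have "\<dots> = (\<Sum>\<sigma>\<in>UNIV-{0}. ?Q * (\<Sum>\<xi>\<in>UNIV. \<Sum>\<eta>\<in>UNIV.
        ch (((sqnorm \<xi> / r - sqnorm \<eta>) / 4) * inverse \<sigma>) * (PP E \<xi> * PP E \<eta>)))"
    by (intro sum.cong refl) (use AA_expand[OF _ r qr] in auto)
  also have "\<dots> = ?Q * (\<Sum>\<xi>\<in>UNIV. \<Sum>\<eta>\<in>UNIV. (\<Sum>\<sigma>\<in>UNIV-{0}.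
        ch (((sqnorm \<xi> / r - sqnorm \<eta>) / 4) * inverse \<sigma>)) * (PP E \<xi> * PP E \<eta>))"
    by (simp add: sum_distrib_left sum_distrib_right swap2[symmetric])
  also have "\<dots> = ?Q * (\<Sum>\<xi>\<in>UNIV. \<Sum>\<eta>\<in>UNIV.
        (if sqnorm \<xi> = r * sqnorm \<eta> then of_nat CARD('a) else 0) * (PP E \<xi> * PP E \<eta>) - PP E \<xi> * PP E \<eta>)"
  proof -
    have iff: "((sqnorm \<xi> / r - sqnorm \<eta>) / 4 = 0) \<longleftrightarrow> sqnorm \<xi> = r * sqnorm \<eta>" for \<xi> \<eta> :: "'a ^ 'n"
      using r four_nz by (auto simp: field_simps)
    have inner: "(\<Sum>\<sigma>\<in>UNIV-{0}. ch (((sqnorm \<xi> / r - sqnorm \<eta>) / 4) * inverse \<sigma>))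
       = (if sqnorm \<xi> = r * sqnorm \<eta> then of_nat CARD('a) else 0) - 1" for \<xi> \<eta> :: "'a ^ 'n"
      using sum_ch_inverse[of "(sqnorm \<xi> / r - sqnorm \<eta>) / 4"] iff[of \<xi> \<eta>] by simp
    show ?thesis by (simp only: inner left_diff_distrib mult_1)
  qed
  also have "\<dots> = ?Q * (of_nat CARD('a) * Wc E r - (\<Sum>\<xi>\<in>UNIV. PP E \<xi>) * (\<Sum>\<eta>\<in>UNIV. PP E \<eta>))"
  proof -
    have a: "(\<Sum>\<xi>\<in>UNIV. \<Sum>\<eta>\<in>UNIV.
        (if sqnorm \<xi> = r * sqnorm \<eta> then of_nat CARD('a) else 0) * (PP E \<xi> * PP E \<eta>) - PP E \<xi> * PP E \<eta>)
       = (\<Sum>\<xi>\<in>UNIV. \<Sum>\<eta>\<in>UNIV. (if sqnorm \<xi> = r * sqnorm \<eta> then of_nat CARD('a) else 0) * (PP E \<xi> * PP E \<eta>))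
         - (\<Sum>\<xi>\<in>UNIV. \<Sum>\<eta>\<in>UNIV. PP E \<xi> * PP E \<eta>)"
      by (simp only: sum_subtractf)
    have b: "(\<Sum>\<xi>\<in>UNIV. \<Sum>\<eta>\<in>UNIV. (if sqnorm \<xi> = r * sqnorm \<eta> then of_nat CARD('a) else 0) * (PP E \<xi> * PP E \<eta>))
       = of_nat CARD('a) * Wc E r"
      unfolding Wc_def sum_distrib_left by (intro sum.cong refl) simp
    have c: "(\<Sum>\<xi>\<in>UNIV. \<Sum>\<eta>\<in>UNIV. PP E \<xi> * PP E \<eta>) = (\<Sum>\<xi>\<in>UNIV. PP E \<xi>) * (\<Sum>\<eta>\<in>UNIV. PP E \<eta>)"
      by (rule sum_product[symmetric])
    show ?thesis by (simp only: a b c)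
  qed
  also have "\<dots> = ?Q * (of_nat CARD('a) * Wc E r - (?Q * of_nat (card E))^2)"
    by (simp add: plancherel power2_eq_square)
  finally show ?thesis .
qed

lemma Tot_formula:
  fixes E :: "('a ^ 'n::finite) set"
  assumes r: "r \<noteq> 0" and qr: "(qc r :: complex) ^ CARD('n) = 1"
  shows "of_nat CARD('a) ^ CARD('n) * (of_nat CARD('a) * complex_of_real (Tot E r))
    = of_nat CARD('a) ^ CARD('n) * of_nat (card E) ^ 4 + (of_nat CARD('a) * Wc E r - (of_nat CARD('a) ^ CARD('n) * of_nat (card E))^2)"
proof -
  let ?Q = "of_nat CARD('a) ^ CARD('n) :: complex"
  have "of_nat CARD('a) * complex_of_real (Tot E r) = A E 0 * A E 0 + (\<Sum>\<sigma>\<in>UNIV-{0}. A E (- (\<sigma> * r)) * A E \<sigma>)"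
    unfolding Tot_count by (simp add: sum.remove[of UNIV 0])
  hence "?Q * ?Q * (of_nat CARD('a) * complex_of_real (Tot E r))
     = ?Q * ?Q * (A E 0 * A E 0) + ?Q * (of_nat CARD('a) * Wc E r - (?Q * of_nat (card E))^2)"
    using sum_AA[OF r qr, of E] by (simp add: algebra_simps)
  hence "?Q * (?Q * (of_nat CARD('a) * complex_of_real (Tot E r)))
     = ?Q * (?Q * of_nat (card E) ^ 4 + (of_nat CARD('a) * Wc E r - (?Q * of_nat (card E))^2))"
    by (simp add: A_0 algebra_simps power2_eq_square power4_eq_xxxx)
  thus ?thesis by simp
qed

end


lemma swap_factor:
  fixes g :: "'c::comm_semiring_1"
  shows "(\<Sum>\<sigma>\<in>S. g * (\<Sum>\<xi>\<in>T. F \<sigma> \<xi> * P \<xi>)) = g * (\<Sum>\<xi>\<in>T. (\<Sum>\<sigma>\<in>S. F \<sigma> \<xi>) * P \<xi>)"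
proof -
  have "(\<Sum>\<sigma>\<in>S. g * (\<Sum>\<xi>\<in>T. F \<sigma> \<xi> * P \<xi>)) = g * (\<Sum>\<sigma>\<in>S. \<Sum>\<xi>\<in>T. F \<sigma> \<xi> * P \<xi>)"
    by (simp only: sum_distrib_left)
  also have "\<dots> = g * (\<Sum>\<xi>\<in>T. \<Sum>\<sigma>\<in>S. F \<sigma> \<xi> * P \<xi>)"
    by (rule arg_cong[where f="\<lambda>z. g * z"], rule sum.swap)
  also have "\<dots> = g * (\<Sum>\<xi>\<in>T. (\<Sum>\<sigma>\<in>S. F \<sigma> \<xi>) * P \<xi>)"
    by (simp only: sum_distrib_right)
  finally show ?thesis .
qed

context achar
begin

definition PR :: "('a ^ 'n::finite) set \<Rightarrow> 'a ^ 'n \<Rightarrow> real" where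
  "PR E \<xi> = cmod (Eh E \<xi>) ^ 2"

lemma PP_PR: "PP E \<xi> = complex_of_real (PR E \<xi>)"
  unfolding PR_def by (rule PP_real)

lemma PR_nonneg: "PR E \<xi> \<ge> 0" unfolding PR_def by simp

lemma sum_PR:
  fixes E :: "('a ^ 'n::finite) set"
  shows "(\<Sum>\<xi>\<in>UNIV. PR E \<xi>) = real CARD('a) ^ CARD('n) * real (card E)"
proof -
  have "complex_of_real (\<Sum>\<xi>\<in>UNIV. PR E \<xi>) = complex_of_real (real CARD('a) ^ CARD('n) * real (card E))"
    using plancherel[of E] by (simp add: PP_PR)
  thus ?thesis by (simp only: of_real_eq_iff)
qed

definition WR :: "('a ^ 'n::finite) set \<Rightarrow> 'a \<Rightarrow> real" where
  "WR E r = (\<Sum>\<xi>\<in>UNIV. \<Sum>\<eta>\<in>UNIV. if sqnorm \<xi> = r * sqnorm \<eta> then PR E \<xi> * PR E \<eta> else 0)"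

definition ZR :: "('a ^ 'n::finite) set \<Rightarrow> real" where
  "ZR E = (\<Sum>\<xi>\<in>UNIV. if sqnorm \<xi> = 0 then PR E \<xi> else 0)"

lemma Wc_WR: "Wc E r = complex_of_real (WR E r)"
  unfolding Wc_def WR_def of_real_sum by (intro sum.cong refl) (auto simp: PP_PR)

lemma ZR_nonneg: "ZR E \<ge> 0"
  unfolding ZR_def by (intro sum_nonneg) (simp add: PR_nonneg)

lemma ZR_le:
  fixes E :: "('a ^ 'n::finite) set"
  shows "ZR E \<le> real CARD('a) ^ CARD('n) * real (card E)"
  unfolding ZR_def sum_PR[symmetric] by (intro sum_mono) (simp add: PR_nonneg)

lemma ZR_WR: "ZR E ^ 2 \<le> WR E r"
proof -
  have "ZR E ^ 2 = (\<Sum>\<xi>\<in>UNIV. \<Sum>\<eta>\<in>UNIV. (if sqnorm \<xi> = 0 then PR E \<xi> else 0) * (if sqnorm \<eta> = 0 then PR E \<eta> else 0))"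
    unfolding ZR_def power2_eq_square by (rule sum_product)
  also have "\<dots> \<le> WR E r"
    unfolding WR_def by (intro sum_mono) (auto simp: PR_nonneg)
  finally show ?thesis .
qed

lemma WR_nonneg: "WR E r \<ge> 0"
  unfolding WR_def by (intro sum_nonneg) (auto simp: PR_nonneg)

lemma Tot_real:
  fixes E :: "('a ^ 'n::finite) set"
  assumes r: "r \<noteq> 0" and qr: "(qc r :: complex) ^ CARD('n) = 1"
  shows "real CARD('a) ^ CARD('n) * (real CARD('a) * Tot E r)
    = real CARD('a) ^ CARD('n) * real (card E) ^ 4 + (real CARD('a) * WR E r - (real CARD('a) ^ CARD('n) * real (card E))^2)"
proof -
  have "complex_of_real (real CARD('a) ^ CARD('n) * (real CARD('a) * Tot E r))
    = complex_of_real (real CARD('a) ^ CARD('n) * real (card E) ^ 4 + (real CARD('a) * WR E r - (real CARD('a) ^ CARD('n) * real (card E))^2))"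
    using Tot_formula[OF r qr, of E] by (simp add: Wc_WR)
  thus ?thesis by (simp only: of_real_eq_iff)
qed

lemma N0_split:
  fixes E :: "('a ^ 'n::finite) set"
  shows "of_nat CARD('a) ^ CARD('n) * (of_nat CARD('a) * complex_of_real (N0 E))
     = of_nat CARD('a) ^ CARD('n) * of_nat (card E) ^ 2 +
       (\<Sum>\<sigma>\<in>UNIV-{0}. G \<sigma> ^ CARD('n) * (\<Sum>\<xi>\<in>UNIV. ch ((- sqnorm \<xi> / 4) * inverse \<sigma>) * PP E \<xi>))"
proof -
  have "of_nat CARD('a) * complex_of_real (N0 E) = A E 0 + (\<Sum>\<sigma>\<in>UNIV-{0}. A E \<sigma>)"
    unfolding N0_count by (simp add: sum.remove[of UNIV 0])
  hence "of_nat CARD('a) ^ CARD('n) * (of_nat CARD('a) * complex_of_real (N0 E))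
     = of_nat CARD('a) ^ CARD('n) * A E 0 + (\<Sum>\<sigma>\<in>UNIV-{0}. of_nat CARD('a) ^ CARD('n) * A E \<sigma>)"
    by (simp add: algebra_simps sum_distrib_left)
  also have "(\<Sum>\<sigma>\<in>UNIV-{0}. of_nat CARD('a) ^ CARD('n) * A E \<sigma>)
     = (\<Sum>\<sigma>\<in>UNIV-{0}. G \<sigma> ^ CARD('n) * (\<Sum>\<xi>\<in>UNIV. ch ((- sqnorm \<xi> / 4) * inverse \<sigma>) * PP E \<xi>))"
  proof (rule sum.cong[OF refl])
    fix \<sigma> :: 'a assume "\<sigma> \<in> UNIV - {0}"
    hence s: "\<sigma> \<noteq> 0" by simp
    have eq: "- sqnorm \<xi> / (4 * \<sigma>) = (- sqnorm \<xi> / 4) * inverse \<sigma>" for \<xi> :: "'a ^ 'n"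
      using s four_nz by (simp add: field_simps)
    show "of_nat CARD('a) ^ CARD('n) * A E \<sigma> = G \<sigma> ^ CARD('n) * (\<Sum>\<xi>\<in>UNIV. ch ((- sqnorm \<xi> / 4) * inverse \<sigma>) * PP E \<xi>)"
      by (simp only: A_expand[OF s] eq)
  qed
  finally show ?thesis by (simp add: A_0)
qed

lemma G_pow_even:
  assumes s: "\<sigma> \<noteq> 0" and ev: "even m"
  shows "G \<sigma> ^ m = (qc (-1::'a) * of_nat CARD('a)) ^ (m div 2)"
proof -
  have "G \<sigma> ^ 2 = qc (- (\<sigma> * \<sigma>)) * of_nat CARD('a)"
    using G_mult[OF s s] by (simp add: power2_eq_square)
  also have "(qc (- (\<sigma> * \<sigma>)) :: complex) = qc (-1::'a)"
  proof -
    have "(qc (- (\<sigma> * \<sigma>)) :: complex) = qc ((-1) * \<sigma>^2)" by (simp add: power2_eq_square)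
    also have "\<dots> = qc (-1::'a) * qc (\<sigma>^2)" by (rule qc_mult[OF oddq])
    also have "(qc (\<sigma>^2) :: complex) = 1" by (rule qc_sq[OF oddq s])
    finally show ?thesis by simp
  qed
  finally have "G \<sigma> ^ 2 = qc (-1::'a) * of_nat CARD('a)" .
  moreover have "G \<sigma> ^ m = (G \<sigma> ^ 2) ^ (m div 2)" using ev by (simp add: power_mult[symmetric])
  ultimately show ?thesis by simp
qed

lemma N0_even:
  fixes E :: "('a ^ 'n::finite) set"
  assumes ev: "even CARD('n)"
  shows "real CARD('a) ^ CARD('n) * (real CARD('a) * N0 E)
     = real CARD('a) ^ CARD('n) * real (card E) ^ 2 +
       (qc (-1::'a) * real CARD('a)) ^ (CARD('n) div 2) * (real CARD('a) * ZR E - real CARD('a) ^ CARD('n) * real (card E))"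
proof -
  let ?g = "(qc (-1::'a) * of_nat CARD('a)) ^ (CARD('n) div 2) :: complex"
  have "(\<Sum>\<sigma>\<in>UNIV-{0}. G \<sigma> ^ CARD('n) * (\<Sum>\<xi>\<in>UNIV. ch ((- sqnorm \<xi> / 4) * inverse \<sigma>) * PP E \<xi>))
      = (\<Sum>\<sigma>\<in>UNIV-{0}. ?g * (\<Sum>\<xi>\<in>UNIV. ch ((- sqnorm \<xi> / 4) * inverse \<sigma>) * PP E \<xi>))"
    by (intro sum.cong refl) (simp add: G_pow_even ev)
  also have "\<dots> = ?g * (\<Sum>\<xi>\<in>UNIV. (\<Sum>\<sigma>\<in>UNIV-{0}. ch ((- sqnorm \<xi> / 4) * inverse \<sigma>)) * PP E \<xi>)"
    by (rule swap_factor)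
  also have "\<dots> = ?g * (\<Sum>\<xi>\<in>UNIV. (if sqnorm \<xi> = 0 then of_nat CARD('a) else 0) * PP E \<xi> - PP E \<xi>)"
  proof -
    have inner: "(\<Sum>\<sigma>\<in>UNIV-{0}. ch ((- sqnorm \<xi> / 4) * inverse \<sigma>)) = (if sqnorm \<xi> = 0 then of_nat CARD('a) else 0) - 1"
      for \<xi> :: "'a ^ 'n"
      using sum_ch_inverse[of "- sqnorm \<xi> / 4"] four_nz by simp
    show ?thesis by (simp only: inner left_diff_distrib mult_1)
  qed
  also have "\<dots> = ?g * (of_nat CARD('a) * complex_of_real (ZR E) - of_nat CARD('a) ^ CARD('n) * of_nat (card E))"
  proof -
    have a: "(\<Sum>\<xi>\<in>UNIV. (if sqnorm \<xi> = 0 then of_nat CARD('a) else 0) * PP E \<xi> - PP E \<xi>)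
       = (\<Sum>\<xi>\<in>UNIV. (if sqnorm \<xi> = 0 then of_nat CARD('a) else 0) * PP E \<xi>) - (\<Sum>\<xi>\<in>UNIV. PP E \<xi>)"
      by (simp only: sum_subtractf)
    have b: "(\<Sum>\<xi>\<in>UNIV. (if sqnorm \<xi> = 0 then of_nat CARD('a) else 0) * PP E \<xi>) = of_nat CARD('a) * complex_of_real (ZR E)"
      unfolding ZR_def of_real_sum sum_distrib_left by (intro sum.cong refl) (simp add: PP_PR)
    show ?thesis by (simp only: a b plancherel)
  qed
  finally have 1: "(\<Sum>\<sigma>\<in>UNIV-{0}. G \<sigma> ^ CARD('n) * (\<Sum>\<xi>\<in>UNIV. ch ((- sqnorm \<xi> / 4) * inverse \<sigma>) * PP E \<xi>))
     = ?g * (of_nat CARD('a) * complex_of_real (ZR E) - of_nat CARD('a) ^ CARD('n) * of_nat (card E))" .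
  have "complex_of_real (real CARD('a) ^ CARD('n) * (real CARD('a) * N0 E))
     = complex_of_real (real CARD('a) ^ CARD('n) * real (card E) ^ 2 +
       (qc (-1::'a) * real CARD('a)) ^ (CARD('n) div 2) * (real CARD('a) * ZR E - real CARD('a) ^ CARD('n) * real (card E)))"
    using N0_split[of E] unfolding 1 by (simp add: qc_complex)
  thus ?thesis by (simp only: of_real_eq_iff)
qed

lemma N0_odd:
  fixes E :: "('a ^ 'n::finite) set"
  assumes od: "odd CARD('n)"
  shows "\<bar>real CARD('a) * N0 E - real (card E) ^ 2\<bar> \<le> sqrt (real CARD('a)) ^ CARD('n) * sqrt (real CARD('a)) * real (card E)"
proof -
  have "(\<Sum>\<sigma>\<in>UNIV-{0}. G \<sigma> ^ CARD('n) * (\<Sum>\<xi>\<in>UNIV. ch ((- sqnorm \<xi> / 4) * inverse \<sigma>) * PP E \<xi>))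
      = (\<Sum>\<sigma>\<in>UNIV-{0}. G 1 ^ CARD('n) * (\<Sum>\<xi>\<in>UNIV. qc \<sigma> * ch ((- sqnorm \<xi> / 4) * inverse \<sigma>) * PP E \<xi>))"
  proof (rule sum.cong[OF refl])
    fix \<sigma> :: 'a assume "\<sigma> \<in> UNIV - {0}"
    hence s: "\<sigma> \<noteq> 0" by simp
    have "G \<sigma> ^ CARD('n) = qc \<sigma> ^ CARD('n) * G 1 ^ CARD('n)" using G_qc[OF s] by (simp add: power_mult_distrib)
    also have "(qc \<sigma> :: complex) ^ CARD('n) = qc \<sigma>" by (rule qc_pow_odd[OF oddq od])
    finally show "G \<sigma> ^ CARD('n) * (\<Sum>\<xi>\<in>UNIV. ch ((- sqnorm \<xi> / 4) * inverse \<sigma>) * PP E \<xi>)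
        = G 1 ^ CARD('n) * (\<Sum>\<xi>\<in>UNIV. qc \<sigma> * ch ((- sqnorm \<xi> / 4) * inverse \<sigma>) * PP E \<xi>)"
      by (simp add: sum_distrib_left algebra_simps)
  qed
  also have "\<dots> = G 1 ^ CARD('n) * (\<Sum>\<xi>\<in>UNIV. (\<Sum>\<sigma>\<in>UNIV-{0}. qc \<sigma> * ch ((- sqnorm \<xi> / 4) * inverse \<sigma>)) * PP E \<xi>)"
    by (rule swap_factor)
  also have "\<dots> = G 1 ^ CARD('n) * (\<Sum>\<xi>\<in>UNIV. K (- sqnorm \<xi> / 4) * PP E \<xi>)"
    by (simp only: sum_qc_ch_inverse)
  finally have 1: "(\<Sum>\<sigma>\<in>UNIV-{0}. G \<sigma> ^ CARD('n) * (\<Sum>\<xi>\<in>UNIV. ch ((- sqnorm \<xi> / 4) * inverse \<sigma>) * PP E \<xi>))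
     = G 1 ^ CARD('n) * (\<Sum>\<xi>\<in>UNIV. K (- sqnorm \<xi> / 4) * PP E \<xi>)" .
  let ?Q = "real CARD('a) ^ CARD('n)"
  have "complex_of_real ?Q * (of_nat CARD('a) * complex_of_real (N0 E) - of_nat (card E) ^ 2)
     = G 1 ^ CARD('n) * (\<Sum>\<xi>\<in>UNIV. K (- sqnorm \<xi> / 4) * PP E \<xi>)"
    using N0_split[of E] unfolding 1 by (simp add: algebra_simps)
  hence h: "complex_of_real (?Q * (real CARD('a) * N0 E - real (card E) ^ 2))
     = G 1 ^ CARD('n) * (\<Sum>\<xi>\<in>UNIV. K (- sqnorm \<xi> / 4) * PP E \<xi>)" by simp
  have "cmod (G 1 ^ CARD('n) * (\<Sum>\<xi>\<in>UNIV. K (- sqnorm \<xi> / 4) * PP E \<xi>))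
      = \<bar>?Q * (real CARD('a) * N0 E - real (card E) ^ 2)\<bar>"
    unfolding h[symmetric] by (rule norm_of_real)
  hence "?Q * \<bar>real CARD('a) * N0 E - real (card E) ^ 2\<bar> = cmod (G 1 ^ CARD('n) * (\<Sum>\<xi>\<in>UNIV. K (- sqnorm \<xi> / 4) * PP E \<xi>))"
    by (simp add: abs_mult)
  also have "\<dots> = cmod (G 1) ^ CARD('n) * cmod (\<Sum>\<xi>\<in>UNIV. K (- sqnorm \<xi> / 4) * PP E \<xi>)"
    by (simp add: norm_mult norm_power)
  also have "cmod (G 1) = sqrt (real CARD('a))"
    using norm_G_sq[of 1] by (metis norm_ge_zero one_neq_zero real_sqrt_unique)
  also have "cmod (\<Sum>\<xi>\<in>UNIV. K (- sqnorm \<xi> / 4) * PP E \<xi>) \<le> (\<Sum>\<xi>\<in>UNIV. sqrt (real CARD('a)) * PR E \<xi>)"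
  proof -
    have "cmod (\<Sum>\<xi>\<in>UNIV. K (- sqnorm \<xi> / 4) * PP E \<xi>) \<le> (\<Sum>\<xi>\<in>UNIV. cmod (K (- sqnorm \<xi> / 4) * PP E \<xi>))"
      by (rule norm_sum)
    also have "\<dots> \<le> (\<Sum>\<xi>\<in>UNIV. sqrt (real CARD('a)) * PR E \<xi>)"
    proof (rule sum_mono)
      fix \<xi> :: "'a ^ 'n"
      have "cmod (K (- sqnorm \<xi> / 4) * PP E \<xi>) = cmod (K (- sqnorm \<xi> / 4)) * PR E \<xi>"
        by (simp add: PP_PR norm_mult PR_nonneg)
      also have "\<dots> \<le> sqrt (real CARD('a)) * PR E \<xi>"
        by (rule mult_right_mono[OF norm_K PR_nonneg])
      finally show "cmod (K (- sqnorm \<xi> / 4) * PP E \<xi>) \<le> sqrt (real CARD('a)) * PR E \<xi>" .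
    qed
    finally show ?thesis .
  qed
  also have "(\<Sum>\<xi>\<in>UNIV. sqrt (real CARD('a)) * PR E \<xi>) = sqrt (real CARD('a)) * (?Q * real (card E))"
    by (simp add: sum_distrib_left[symmetric] sum_PR)
  finally have "?Q * \<bar>real CARD('a) * N0 E - real (card E) ^ 2\<bar>
      \<le> sqrt (real CARD('a)) ^ CARD('n) * (sqrt (real CARD('a)) * (?Q * real (card E)))"
    by (simp add: mult_left_mono)
  hence "?Q * \<bar>real CARD('a) * N0 E - real (card E) ^ 2\<bar>
      \<le> ?Q * (sqrt (real CARD('a)) ^ CARD('n) * sqrt (real CARD('a)) * real (card E))"
    by (simp add: algebra_simps)
  moreover have "?Q > 0" by simp
  ultimately show ?thesis by (simp add: mult_le_cancel_left_pos)
qed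

end


lemma sqnorm_sym: "sqnorm (a - b) = sqnorm (b - (a :: 'a::comm_ring_1 ^ 'n))"
  unfolding sqnorm_def by (simp add: power2_commute)

lemma sqnorm_zero: "sqnorm (0 :: 'a::comm_ring_1 ^ 'n) = 0"
  unfolding sqnorm_def by simp

lemma sum_ind_card:
  assumes "finite A"
  shows "(\<Sum>y\<in>A. if P y then 1 else 0 :: real) = real (card {y\<in>A. P y})"
  using assms by (simp add: sum.inter_filter[symmetric])

lemma inj_star_map:
  fixes f :: "nat \<Rightarrow> 'b"
  assumes inj: "inj_on f {0..<k}" and nc: "\<And>j. j < k \<Longrightarrow> f j \<noteq> c"
  shows "inj_on (\<lambda>j. if j = 1 then c else f (j - 2)) {1..k+1}"
proof (rule inj_onI)
  fix i j assume i: "i \<in> {1..k+1}" and j: "j \<in> {1..k+1}"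
    and eq: "(if i = 1 then c else f (i - 2)) = (if j = 1 then c else f (j - 2))"
  show "i = j"
  proof (cases "i = 1")
    case True
    show ?thesis
    proof (rule ccontr)
      assume "i \<noteq> j"
      hence "j \<noteq> 1" "j - 2 < k" using True j by auto
      thus False using eq True nc by auto
    qed
  next
    case False
    show ?thesis
    proof (cases "j = 1")
      case True
      hence "i - 2 < k" using False i by auto
      thus ?thesis using eq True False nc by auto
    next
      case False2: False
      hence "f (i - 2) = f (j - 2)" using eq False by simp
      moreover have "i - 2 \<in> {0..<k}" "j - 2 \<in> {0..<k}" using i j False False2 by auto
      ultimately have "i - 2 = j - 2" using inj by (meson inj_onD)
      thus ?thesis using i j False False2 by auto
    qed
  qed
qed

lemma pick_star:
  fixes E :: "('a::field ^ 'n::finite) set"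
  assumes xE: "x \<in> E" and yE: "y \<in> E" and t: "t \<noteq> 0" and r: "r \<noteq> 0"
    and cX: "k \<le> card {x'\<in>E. sqnorm (x - x') = t}"
    and cY: "k \<le> card {y'\<in>E. sqnorm (y - y') = r * t}"
  shows "contains_star_pair E k r"
proof -
  obtain X' where X': "X' \<subseteq> {x'\<in>E. sqnorm (x - x') = t}" "card X' = k" "finite X'"
    using obtain_subset_with_card_n[OF cX] by blast
  obtain Y' where Y': "Y' \<subseteq> {y'\<in>E. sqnorm (y - y') = r * t}" "card Y' = k" "finite Y'"
    using obtain_subset_with_card_n[OF cY] by blast
  obtain fX where fX: "bij_betw fX {0..<k} X'" using ex_bij_betw_nat_finite[OF X'(3)] X'(2) by auto
  obtain fY where fY: "bij_betw fY {0..<k} Y'" using ex_bij_betw_nat_finite[OF Y'(3)] Y'(2) by auto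
  define xs where "xs = (\<lambda>j. if j = 1 then x else fX (j - 2))"
  define ys where "ys = (\<lambda>j. if j = 1 then y else fY (j - 2))"
  have fXin: "fX j \<in> X'" if "j < k" for j using fX that by (auto simp: bij_betw_def)
  have fYin: "fY j \<in> Y'" if "j < k" for j using fY that by (auto simp: bij_betw_def)
  have dX: "sqnorm (x - fX j) = t" "fX j \<in> E" if "j < k" for j using fXin[OF that] X'(1) by auto
  have dY: "sqnorm (y - fY j) = r * t" "fY j \<in> E" if "j < k" for j using fYin[OF that] Y'(1) by auto
  have rt: "r * t \<noteq> 0" using r t by simp
  have injX: "inj_on fX {0..<k}" using fX by (simp add: bij_betw_def)
  have injY: "inj_on fY {0..<k}" using fY by (simp add: bij_betw_def)
  have nX: "fX j \<noteq> x" if "j < k" for j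
    using dX[OF that] t by (auto simp: sqnorm_zero)
  have nY: "fY j \<noteq> y" if "j < k" for j
    using dY[OF that] rt by (auto simp: sqnorm_zero)
  have inj_xs: "inj_on xs {1..k+1}" unfolding xs_def by (rule inj_star_map[OF injX nX])
  have inj_ys: "inj_on ys {1..k+1}" unfolding ys_def by (rule inj_star_map[OF injY nY])
  have img_xs: "xs ` {1..k+1} \<subseteq> E"
  proof
    fix z assume "z \<in> xs ` {1..k+1}"
    then obtain j where j: "j \<in> {1..k+1}" "z = xs j" by blast
    show "z \<in> E"
    proof (cases "j = 1")
      case True thus ?thesis using j xE unfolding xs_def by simp
    next
      case False
      hence "j - 2 < k" using j by auto
      thus ?thesis using j False dX unfolding xs_def by simp
    qed
  qed
  have img_ys: "ys ` {1..k+1} \<subseteq> E"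
  proof
    fix z assume "z \<in> ys ` {1..k+1}"
    then obtain j where j: "j \<in> {1..k+1}" "z = ys j" by blast
    show "z \<in> E"
    proof (cases "j = 1")
      case True thus ?thesis using j yE unfolding ys_def by simp
    next
      case False
      hence "j - 2 < k" using j by auto
      thus ?thesis using j False dY unfolding ys_def by simp
    qed
  qed
  have edges: "sqnorm (ys i - ys j) = r * sqnorm (xs i - xs j) \<and> sqnorm (xs i - xs j) \<noteq> 0"
    if "{i, j} \<in> star_edges k" for i j
  proof -
    have "\<exists>m. {i, j} = {1, m} \<and> 2 \<le> m \<and> m \<le> k + 1"
      using that unfolding star_edges_def by (simp only: mem_Collect_eq)
    then obtain m where m: "{i, j} = {1, m}" "2 \<le> m" "m \<le> k + 1" by (elim exE conjE) simp
    have mk: "m - 2 < k" "m \<noteq> 1" using m by auto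
    have A: "sqnorm (ys 1 - ys m) = r * sqnorm (xs 1 - xs m) \<and> sqnorm (xs 1 - xs m) \<noteq> 0"
      using dX[OF mk(1)] dY[OF mk(1)] mk t unfolding xs_def ys_def by simp
    from m(1) have "(i = 1 \<and> j = m) \<or> (i = m \<and> j = 1)" by (auto simp: doubleton_eq_iff)
    thus ?thesis
    proof
      assume "i = 1 \<and> j = m" thus ?thesis using A by simp
    next
      assume "i = m \<and> j = 1" thus ?thesis using A sqnorm_sym[of "ys 1"] sqnorm_sym[of "xs 1"] by simp
    qed
  qed
  show ?thesis
    unfolding contains_star_pair_def contains_pair_def
    using inj_xs inj_ys img_xs img_ys edges by blast
qed

lemma count_to_star:
  fixes E :: "('a::field ^ 'n::finite) set"
  assumes fin: "finite E" and r: "r \<noteq> 0" and k1: "k \<ge> 1"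
    and big: "Tz E r > 2 * (real k - 1) * real (card E) ^ 3"
  shows "contains_star_pair E k r"
proof (rule ccontr)
  assume ns: "\<not> contains_star_pair E k r"
  let ?e = "real (card E)"
  define X where "X x t = {x'\<in>E. sqnorm (x - x') = t}" for x t
  have small: "card (X x t) < k \<or> card (X y (r * t)) < k" if "x \<in> E" "y \<in> E" "t \<noteq> 0" for x y t
    using pick_star[OF that r, of k] ns unfolding X_def by (meson not_le)
  define M where "M x y = (\<Sum>x'\<in>E. \<Sum>y'\<in>E.
      if sqnorm (y - y') = r * sqnorm (x - x') \<and> sqnorm (x - x') \<noteq> 0 then 1 else (0::real))" for x y
  have Mb: "M x y \<le> 2 * (real k - 1) * ?e" if xE: "x \<in> E" and yE: "y \<in> E" for x y
  proof -
    define P1 where "P1 x' y' = (sqnorm (y - y') = r * sqnorm (x - x') \<and> card (X y (r * sqnorm (x - x'))) < k)" for x' y'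
    define P2 where "P2 x' y' = (sqnorm (x - x') = sqnorm (y - y') / r \<and> card (X x (sqnorm (y - y') / r)) < k)" for x' y'
    have pt: "(if sqnorm (y - y') = r * sqnorm (x - x') \<and> sqnorm (x - x') \<noteq> 0 then 1 else (0::real))
        \<le> (if P1 x' y' then 1 else 0) + (if P2 x' y' then 1 else 0)" for x' y'
    proof (cases "sqnorm (y - y') = r * sqnorm (x - x') \<and> sqnorm (x - x') \<noteq> 0")
      case True
      hence "card (X x (sqnorm (x - x'))) < k \<or> card (X y (r * sqnorm (x - x'))) < k"
        using small[OF xE yE] by blast
      moreover have "sqnorm (y - y') / r = sqnorm (x - x')" using True r by simp
      ultimately have "P1 x' y' \<or> P2 x' y'" unfolding P1_def P2_def using True by auto
      thus ?thesis by auto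
    qed auto
    have s1: "(\<Sum>y'\<in>E. if P1 x' y' then 1 else (0::real)) \<le> real k - 1" for x'
    proof -
      have "(\<Sum>y'\<in>E. if P1 x' y' then 1 else (0::real)) = real (card {y'\<in>E. P1 x' y'})"
        by (rule sum_ind_card[OF fin])
      also have "card {y'\<in>E. P1 x' y'} \<le> k - 1"
      proof (cases "card (X y (r * sqnorm (x - x'))) < k")
        case True
        hence "{y'\<in>E. P1 x' y'} = X y (r * sqnorm (x - x'))" unfolding P1_def X_def by auto
        thus ?thesis using True by simp
      next
        case False
        hence e: "{y'\<in>E. P1 x' y'} = {}" unfolding P1_def by auto
        show ?thesis unfolding e by simp
      qed
      hence "real (card {y'\<in>E. P1 x' y'}) \<le> real (k - 1)" by (simp only: of_nat_le_iff)
      also have "real (k - 1) = real k - 1" using k1 by (simp add: of_nat_diff)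
      finally show ?thesis .
    qed
    have s2: "(\<Sum>x'\<in>E. if P2 x' y' then 1 else (0::real)) \<le> real k - 1" for y'
    proof -
      have "(\<Sum>x'\<in>E. if P2 x' y' then 1 else (0::real)) = real (card {x'\<in>E. P2 x' y'})"
        by (rule sum_ind_card[OF fin])
      also have "card {x'\<in>E. P2 x' y'} \<le> k - 1"
      proof (cases "card (X x (sqnorm (y - y') / r)) < k")
        case True
        hence "{x'\<in>E. P2 x' y'} = X x (sqnorm (y - y') / r)" unfolding P2_def X_def by auto
        thus ?thesis using True by simp
      next
        case False
        hence e: "{x'\<in>E. P2 x' y'} = {}" unfolding P2_def by auto
        show ?thesis unfolding e by simp
      qed
      hence "real (card {x'\<in>E. P2 x' y'}) \<le> real (k - 1)" by (simp only: of_nat_le_iff)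
      also have "real (k - 1) = real k - 1" using k1 by (simp add: of_nat_diff)
      finally show ?thesis .
    qed
    have "M x y \<le> (\<Sum>x'\<in>E. \<Sum>y'\<in>E. (if P1 x' y' then 1 else 0) + (if P2 x' y' then 1 else 0))"
      unfolding M_def by (intro sum_mono pt)
    also have "\<dots> = (\<Sum>x'\<in>E. \<Sum>y'\<in>E. if P1 x' y' then 1 else 0) + (\<Sum>y'\<in>E. \<Sum>x'\<in>E. if P2 x' y' then 1 else 0)"
    proof -
      have "(\<Sum>x'\<in>E. \<Sum>y'\<in>E. (if P1 x' y' then 1 else 0) + (if P2 x' y' then (1::real) else 0))
          = (\<Sum>x'\<in>E. \<Sum>y'\<in>E. if P1 x' y' then 1 else 0) + (\<Sum>x'\<in>E. \<Sum>y'\<in>E. if P2 x' y' then 1 else 0)"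
        by (simp only: sum.distrib)
      also have "(\<Sum>x'\<in>E. \<Sum>y'\<in>E. if P2 x' y' then 1 else (0::real)) = (\<Sum>y'\<in>E. \<Sum>x'\<in>E. if P2 x' y' then 1 else 0)"
        by (rule sum.swap)
      finally show ?thesis .
    qed
    also have "\<dots> \<le> (\<Sum>x'\<in>E. real k - 1) + (\<Sum>y'\<in>E. real k - 1)"
      by (intro add_mono sum_mono s1 s2)
    also have "\<dots> = 2 * (real k - 1) * ?e" by simp
    finally show ?thesis .
  qed
  have "Tz E r = (\<Sum>x\<in>E. \<Sum>y\<in>E. M x y)"
    unfolding Tz_def M_def
    by (rule sum.cong[OF refl], rule sum.swap)
  also have "\<dots> \<le> (\<Sum>x\<in>E. \<Sum>y\<in>E. 2 * (real k - 1) * ?e)"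
    by (intro sum_mono Mb)
  also have "\<dots> = 2 * (real k - 1) * ?e ^ 3" by (simp add: power3_eq_cube)
  finally show False using big by simp
qed


lemma even_ineq:
  fixes Q N e g Z W T0 N0 kk :: real
  assumes Q: "Q \<ge> 3" and NQ: "N \<ge> Q" and g: "g = N \<or> g = -N"
    and Z0: "0 \<le> Z" and Zle: "Z \<le> N^2 * e" and ZW: "Z^2 \<le> W"
    and hT: "N^2 * (Q * T0) = N^2 * e^4 + (Q * W - (N^2 * e)^2)"
    and hN: "N^2 * (Q * N0) = N^2 * e^2 + g * (Q * Z - N^2 * e)"
    and he: "e \<ge> (3 * kk + 1) * N" and kk: "kk \<ge> 1"
  shows "T0 - N0^2 > 2 * (kk - 1) * e^3"
proof -
  define D where "D = N^2"
  define u where "u = g * (Q * Z - D * e)"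
  have N0': "N > 0" using Q NQ by simp
  have D0: "D > 0" unfolding D_def using N0' by simp
  have "4 * N \<le> (3 * kk + 1) * N" using kk N0' by (intro mult_right_mono) auto
  hence eN: "e \<ge> 4 * N" using he by linarith
  have e0: "e > 0" using eN N0' by simp
  have hT': "D * (Q * T0) = D * e^4 + (Q * W - (D * e)^2)" using hT unfolding D_def .
  have hN': "D * (Q * N0) = D * e^2 + u" using hN unfolding D_def u_def .
  have e1: "D * D * Q * Q * (T0 - N0^2) = D * Q * (D * e^4 + (Q * W - (D * e)^2)) - (D * e^2 + u)^2"
  proof -
    have "D * D * Q * Q * (T0 - N0^2) = D * Q * (D * (Q * T0)) - (D * (Q * N0))^2"
      by (simp add: power2_eq_square algebra_simps)
    thus ?thesis unfolding hT' hN' .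
  qed
  have gg: "g^2 = D" using g unfolding D_def by auto
  have e2: "u^2 = D * (Q * Z - D * e)^2" unfolding u_def using gg by (simp add: power_mult_distrib)
  have e3: "D * Q^2 * W \<ge> D * Q^2 * Z^2" using ZW D0 by (simp add: mult_left_mono)
  have e4: "D * Q * Z - e * u \<ge> - (Q * D * N * e^2)"
    using g
  proof
    assume gN: "g = N"
    have "D * Q * Z - e * u = Q * Z * (D - N * e) + N * D * e^2"
      unfolding u_def gN by (simp add: power2_eq_square algebra_simps)
    moreover have "D - N * e \<le> 0" unfolding D_def using eN N0' by (simp add: power2_eq_square mult_left_mono)
    hence "Q * Z * (D - N * e) \<ge> Q * (D * e) * (D - N * e)"
      using Zle Q unfolding D_def by (intro mult_right_mono_neg mult_left_mono) auto
    moreover have "Q * (D * e) * (D - N * e) = Q * D * N * e * N - Q * D * N * e^2"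
      unfolding D_def by (simp add: power2_eq_square algebra_simps)
    moreover have "Q * D * N * e * N \<ge> 0" "N * D * e^2 \<ge> 0" using Q D0 N0' e0 by auto
    ultimately show ?thesis by linarith
  next
    assume gN: "g = -N"
    have "D * Q * Z - e * u = Q * Z * (D + N * e) - N * D * e^2"
      unfolding u_def gN by (simp add: power2_eq_square algebra_simps)
    moreover have "Q * Z * (D + N * e) \<ge> 0" using Q Z0 D0 N0' e0 by auto
    moreover have "N * D * e^2 \<le> Q * D * N * e^2"
      using Q D0 N0' e0 by (intro mult_right_mono) auto
    ultimately show ?thesis by linarith
  qed
  have e5: "D * Q * (D * e^4 + (Q * W - (D * e)^2)) - (D * e^2 + u)^2
     = D^2 * Q * e^4 - D^3 * Q * e^2 - D^2 * e^4 - D^3 * e^2 + 2 * D * e * (D * Q * Z - e * u)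
       + (D * Q^2 * W - D * Q^2 * Z^2) - (u^2 - D * (Q * Z - D * e)^2)"
    by (simp add: power2_eq_square power3_eq_cube power4_eq_xxxx algebra_simps)
  have e6: "2 * D * e * (D * Q * Z - e * u) \<ge> 2 * D * e * (- (Q * D * N * e^2))"
    using e4 D0 e0 by (intro mult_left_mono) auto
  have "D * D * Q * Q * (T0 - N0^2) \<ge> D^2 * Q * e^4 - D^3 * Q * e^2 - D^2 * e^4 - D^3 * e^2 + 2 * D * e * (- (Q * D * N * e^2))"
    using e1 e5 e2 e3 e6 by linarith
  hence "D^2 * (Q^2 * (T0 - N0^2)) \<ge> D^2 * (Q * e^4 - D * Q * e^2 - e^4 - D * e^2 - 2 * Q * N * e^3)"
    by (simp add: power2_eq_square power3_eq_cube algebra_simps)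
  hence key: "Q^2 * (T0 - N0^2) \<ge> Q * e^4 - D * Q * e^2 - e^4 - D * e^2 - 2 * Q * N * e^3"
    using D0 by (simp add: mult_le_cancel_left_pos)
  have p1: "2 * (kk - 1) * Q^2 * e \<le> 2 * (kk - 1) * Q * N * e"
  proof -
    have "Q * Q \<le> Q * N" using NQ Q by (intro mult_left_mono) auto
    hence "(2 * (kk - 1)) * (Q * Q) * e \<le> (2 * (kk - 1)) * (Q * N) * e"
      using kk e0 NQ Q by (intro mult_right_mono mult_left_mono) auto
    thus ?thesis by (simp add: power2_eq_square mult.assoc)
  qed
  have p2: "(Q - 1) * e^2 \<ge> (Q - 1) * ((3 * kk + 1) * N) * e"
    using he Q e0 by (simp add: power2_eq_square mult_left_mono mult_right_mono)
  have p4: "2 * kk * Q * N * e \<le> 3 * kk * (Q - 1) * N * e"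
    using Q kk N0' e0 by (intro mult_right_mono) auto
  have p5: "(Q - 1) * N * e \<ge> (Q - 1) * N * ((3 * kk + 1) * N)"
    using he Q N0' by (intro mult_left_mono) auto
  have p6: "(Q - 1) * N * ((3 * kk + 1) * N) \<ge> (Q - 1) * N * (4 * N)"
    using kk Q N0' by (intro mult_left_mono mult_right_mono) auto
  have p7: "(Q - 1) * N * (4 * N) > (Q + 1) * N^2"
    using Q N0' by (simp add: power2_eq_square algebra_simps)
  have brk: "(Q - 1) * e^2 - (Q + 1) * N^2 - 2 * Q * N * e - 2 * (kk - 1) * Q^2 * e > 0"
  proof -
    have "(Q - 1) * ((3 * kk + 1) * N) * e = 3 * kk * (Q - 1) * N * e + (Q - 1) * N * e"
      by (simp add: algebra_simps)
    moreover have "2 * (kk - 1) * Q * N * e + 2 * Q * N * e = 2 * kk * Q * N * e"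
      by (simp add: algebra_simps)
    ultimately show ?thesis using p1 p2 p4 p5 p6 p7 by linarith
  qed
  hence "e^2 * ((Q - 1) * e^2 - (Q + 1) * N^2 - 2 * Q * N * e - 2 * (kk - 1) * Q^2 * e) > 0"
    using e0 by simp
  hence "Q * e^4 - D * Q * e^2 - e^4 - D * e^2 - 2 * Q * N * e^3 > Q^2 * (2 * (kk - 1) * e^3)"
    unfolding D_def by (simp add: power2_eq_square power3_eq_cube power4_eq_xxxx algebra_simps)
  hence "Q^2 * (T0 - N0^2) > Q^2 * (2 * (kk - 1) * e^3)" using key by linarith
  moreover have "Q^2 > 0" using Q by simp
  ultimately show ?thesis by (simp add: mult_less_cancel_left_pos)
qed

lemma odd_ineq:
  fixes Q s N e W T0 N0 kk c0 :: real
  assumes Q: "Q \<ge> 3" and s: "s = sqrt Q" and Ns: "N \<ge> Q * s"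
    and hT: "N^2 * (Q * T0) = N^2 * e^4 + (Q * W - (N^2 * e)^2)" and W0: "W \<ge> 0"
    and hN: "\<bar>Q * N0 - e^2\<bar> \<le> N * s * e" and N00: "N0 \<ge> 0"
    and he: "e \<ge> c0 * N" and c4: "c0 \<ge> 4" and c2: "c0 - sqrt 3 * kk \<ge> 2" and kk: "kk \<ge> 1"
  shows "T0 - N0^2 > 2 * (kk - 1) * e^3"
proof -
  have s3: "s \<ge> sqrt 3" unfolding s using Q by simp
  have r3: "sqrt 3 > 0" "sqrt 3 * sqrt 3 = 3" by auto
  have s0: "s > 0" using s3 r3 by linarith
  have ss: "s * s = Q" unfolding s using Q by simp
  have N0': "N > 0" using Ns Q s0 by (smt (verit) mult_pos_pos)
  have "4 * N \<le> c0 * N" using c4 N0' by (intro mult_right_mono) auto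
  hence eN: "e \<ge> 4 * N" using he by linarith
  have e0: "e > 0" using eN N0' by simp
  have T1: "Q * T0 \<ge> e^4 - N^2 * e^2"
  proof -
    have "N^2 * (Q * T0) \<ge> N^2 * (e^4 - N^2 * e^2)"
      using hT W0 Q by (simp add: power2_eq_square algebra_simps)
    thus ?thesis using N0' by (simp add: mult_le_cancel_left_pos)
  qed
  have N1: "Q * N0 \<le> e^2 + N * s * e" using hN by linarith
  have N2: "(Q * N0)^2 \<le> (e^2 + N * s * e)^2"
    using N1 N00 Q by (intro power_mono) auto
  have key: "Q^2 * (T0 - N0^2) \<ge> Q * (e^4 - N^2 * e^2) - (e^2 + N * s * e)^2"
  proof -
    have "Q^2 * (T0 - N0^2) = Q * (Q * T0) - (Q * N0)^2" by (simp add: power2_eq_square algebra_simps)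
    moreover have "Q * (Q * T0) \<ge> Q * (e^4 - N^2 * e^2)" using T1 Q by (simp add: mult_left_mono)
    ultimately show ?thesis using N2 by linarith
  qed
  have QQ: "Q^2 \<le> s * N"
  proof -
    have "Q^2 = s * (Q * s)" using ss by (simp add: power2_eq_square algebra_simps)
    also have "\<dots> \<le> s * N" using Ns s0 by (simp add: mult_left_mono)
    finally show ?thesis .
  qed
  have A1: "e * (e - sqrt 3 * kk * N) \<ge> 8 * N^2"
  proof -
    have a: "e - sqrt 3 * kk * N \<ge> (c0 - sqrt 3 * kk) * N" using he by (simp add: algebra_simps)
    have b: "(c0 - sqrt 3 * kk) * N \<ge> 2 * N" using c2 N0' by (simp add: mult_right_mono)
    from a b have "e - sqrt 3 * kk * N \<ge> 2 * N" by linarith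
    hence "e * (e - sqrt 3 * kk * N) \<ge> (4 * N) * (2 * N)"
      using eN N0' by (intro mult_mono) auto
    thus ?thesis by (simp add: power2_eq_square)
  qed
  have A2: "(s * s - 1) * e^2 \<ge> (2/3) * (s * s) * e^2"
    using s3 r3 e0 Q by (intro mult_right_mono) (auto simp: ss)
  have A3: "(2/3) * (s * s) * e^2 = (2/3) * (s * s) * (e * (e - sqrt 3 * kk * N)) + (2/3) * sqrt 3 * (s * s) * kk * N * e"
    by (simp add: power2_eq_square algebra_simps)
  have A4: "(2/3) * (s * s) * (e * (e - sqrt 3 * kk * N)) \<ge> (2/3) * (s * s) * (8 * N^2)"
    using A1 s0 by (intro mult_left_mono) auto
  have A5: "(2/3) * sqrt 3 * (s * s) * kk * N * e \<ge> 2 * kk * s * N * e"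
  proof -
    have "sqrt 3 * sqrt 3 \<le> s * sqrt 3" by (rule mult_right_mono[OF s3]) simp
    hence "(2/3) * sqrt 3 * s \<ge> (2/3) * sqrt 3 * sqrt 3" by (simp add: algebra_simps)
    hence "(2/3) * sqrt 3 * s \<ge> 2" using r3 by simp
    hence "((2/3) * sqrt 3 * s) * (s * kk * N * e) \<ge> 2 * (s * kk * N * e)"
      using s0 kk N0' e0 by (intro mult_right_mono) auto
    thus ?thesis by (simp add: algebra_simps)
  qed
  have A6: "(2/3) * (s * s) * (8 * N^2) > 2 * (s * s) * N^2"
    using s0 N0' by simp
  have brk: "(s * s - 1) * e^2 - 2 * (s * s) * N^2 - 2 * kk * s * N * e > 0"
    using A2 A3 A4 A5 A6 by linarith
  have "Q * (e^4 - N^2 * e^2) - (e^2 + N * s * e)^2 - 2 * (kk - 1) * (s * N) * e^3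
     = e^2 * ((s * s - 1) * e^2 - 2 * (s * s) * N^2 - 2 * kk * s * N * e)"
    using ss[symmetric] by (simp add: power2_eq_square power3_eq_cube power4_eq_xxxx algebra_simps)
  moreover have "e^2 * ((s * s - 1) * e^2 - 2 * (s * s) * N^2 - 2 * kk * s * N * e) > 0"
    using brk e0 by simp
  moreover have "2 * (kk - 1) * Q^2 * e^3 \<le> 2 * (kk - 1) * (s * N) * e^3"
    using QQ kk e0 by (intro mult_right_mono mult_left_mono) auto
  ultimately have "Q^2 * (T0 - N0^2) > Q^2 * (2 * (kk - 1) * e^3)"
    using key by (simp add: algebra_simps)
  moreover have "Q^2 > 0" using Q by simp
  ultimately show ?thesis by (simp add: mult_less_cancel_left_pos)
qed


lemma choose2_ge: "k \<ge> 2 \<Longrightarrow> real (k choose 2) \<ge> real k - 1"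
proof -
  assume k: "k \<ge> 2"
  have "2 * (k - 1) \<le> k * (k - 1)" using k by (intro mult_right_mono) auto
  hence "2 * (k - 1) div 2 \<le> k * (k - 1) div 2" by (rule div_le_mono)
  hence "k - 1 \<le> k choose 2" by (simp add: choose_two)
  hence "real (k - 1) \<le> real (k choose 2)" by (simp only: of_nat_le_iff)
  thus ?thesis using k by (simp add: of_nat_diff)
qed

lemma powr_half_pow: "(q::real) > 0 \<Longrightarrow> q powr (real d / 2) = sqrt q ^ d"
proof -
  assume q: "q > 0"
  have "q powr (real d / 2) = (q powr (1/2)) powr (real d)" by (simp add: powr_powr)
  also have "q powr (1/2) = sqrt q" using q by (simp add: powr_half_sqrt)
  also have "sqrt q powr (real d) = sqrt q ^ d" using q by (simp add: powr_realpow)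
  finally show ?thesis .
qed

theorem theorem1p5:
  fixes E :: "(('a::{field, finite}) ^ 'n) set"
    and k :: nat and r :: 'a
  assumes "odd CARD('a)"
    and "CARD('n) \<ge> 2"
    and "k \<ge> 2"
  shows "(CARD('a) \<ge> 5 \<and> even CARD('n) \<and> r \<noteq> 0 \<and>
          real (card E) \<ge> (31 + 10 * real (k choose 2)) * real CARD('a) powr (real CARD('n) / 2)
          \<longrightarrow> contains_star_pair E k r)
       \<and> (odd CARD('n) \<and> CARD('n) \<ge> 3 \<and> r \<in> nonzero_squares \<and>
          real (card E) \<ge> (4 + sqrt 3 * real (k choose 2)) * real CARD('a) powr (real CARD('n) / 2)
          \<longrightarrow> contains_star_pair E k r)"
proof -
  obtain ch :: "'a \<Rightarrow> complex" where ch: "\<forall>x y. ch (x + y) = ch x * ch y" "\<forall>x. cmod (ch x) = 1" "ch 1 \<noteq> 1"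
    using exists_add_char[OF assms(1)] by blast
  interpret achar ch using ch assms(1) by unfold_locales auto
  define Q where "Q = real CARD('a)"
  define s where "s = sqrt Q"
  define N where "N = s ^ CARD('n)"
  define e where "e = real (card E)"
  define kk where "kk = real k"
  have c2: "CARD('a) \<ge> 2"
  proof -
    have "card {0::'a, 1} = 2" by simp
    moreover have "card {0::'a, 1} \<le> CARD('a)" by (rule card_mono) auto
    ultimately show ?thesis by simp
  qed
  have n2: "CARD('a) \<noteq> 2"
  proof
    assume h: "CARD('a) = 2"
    have "odd (2::nat)" using assms(1) by (simp only: h) simp
    thus False by simp
  qed
  have c3: "CARD('a) \<ge> 3" using c2 n2 by arith
  have Q3: "Q \<ge> 3" unfolding Q_def using c3 by simp
  have s1: "s \<ge> 1" unfolding s_def using Q3 by simp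
  have ss: "s^2 = Q" unfolding s_def using Q3 by simp
  have pw: "real CARD('a) powr (real CARD('n) / 2) = N"
    unfolding N_def s_def Q_def by (rule powr_half_pow) simp
  have NN: "real CARD('a) ^ CARD('n) = N^2"
  proof -
    have "N^2 = s^(CARD('n) * 2)" unfolding N_def by (rule power_mult[symmetric])
    also have "\<dots> = (s^2)^CARD('n)" by (simp only: mult.commute[of "CARD('n)" 2] power_mult)
    finally show ?thesis using ss unfolding Q_def by simp
  qed
  have N0': "N > 0" unfolding N_def using s1 by simp
  have fin: "finite E" by simp
  have k1: "k \<ge> 1" using assms(3) by simp
  have kk1: "kk \<ge> 1" unfolding kk_def using k1 by simp
  have C: "real (k choose 2) \<ge> kk - 1" unfolding kk_def using choose2_ge[OF assms(3)] .
  have N0nn: "N0 E \<ge> 0" unfolding N0_def by (intro sum_nonneg) auto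
  show ?thesis
  proof (intro conjI impI)
    assume h: "CARD('a) \<ge> 5 \<and> even CARD('n) \<and> r \<noteq> 0 \<and>
          real (card E) \<ge> (31 + 10 * real (k choose 2)) * real CARD('a) powr (real CARD('n) / 2)"
    have ev: "even CARD('n)" and r: "r \<noteq> 0" using h by auto
    have he0: "e \<ge> (31 + 10 * real (k choose 2)) * N" using h pw unfolding e_def by simp
    have qr: "(qc r :: complex) ^ CARD('n) = 1" by (rule qc_pow_even[OF oddq r ev])
    have hT: "N^2 * (Q * Tot E r) = N^2 * e^4 + (Q * WR E r - (N^2 * e)^2)"
      using Tot_real[OF r qr, of E] unfolding NN Q_def e_def .
    define g where "g = (qc (-1::'a) * real CARD('a)) ^ (CARD('n) div 2)"
    have hN: "N^2 * (Q * N0 E) = N^2 * e^2 + g * (Q * ZR E - N^2 * e)"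
      using N0_even[OF ev, of E] unfolding NN Q_def e_def g_def .
    have g: "g = N \<or> g = -N"
    proof -
      have "N = Q ^ (CARD('n) div 2)"
      proof -
        have "N = s ^ (2 * (CARD('n) div 2))" unfolding N_def using ev by simp
        also have "\<dots> = (s^2) ^ (CARD('n) div 2)" by (simp add: power_mult)
        finally show ?thesis using ss by simp
      qed
      moreover have "g = (qc (-1::'a)) ^ (CARD('n) div 2) * Q ^ (CARD('n) div 2)"
        unfolding g_def Q_def by (simp add: power_mult_distrib)
      moreover have "(qc (-1::'a) :: real) = 1 \<or> qc (-1::'a) = (-1 :: real)" by (simp add: qc_def)
      ultimately show ?thesis
        by (metis mult_1 mult_minus1 neg_one_even_power neg_one_odd_power power_one)
    qed
    have NQ: "N \<ge> Q"
    proof -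
      have "s ^ 2 \<le> s ^ CARD('n)" using s1 assms(2) by (rule power_increasing[rotated])
      thus ?thesis unfolding N_def using ss by simp
    qed
    have Zle: "ZR E \<le> N^2 * e" using ZR_le[of E] unfolding NN e_def .
    have he: "e \<ge> (3 * kk + 1) * N"
    proof -
      have "3 * kk + 1 \<le> 31 + 10 * real (k choose 2)" using C kk1 by linarith
      hence "(3 * kk + 1) * N \<le> (31 + 10 * real (k choose 2)) * N" using N0' by (intro mult_right_mono) auto
      thus ?thesis using he0 by linarith
    qed
    have "Tot E r - N0 E ^ 2 > 2 * (kk - 1) * e^3"
      by (rule even_ineq[OF Q3 NQ g ZR_nonneg Zle ZR_WR hT hN he kk1])
    hence "Tz E r > 2 * (real k - 1) * real (card E) ^ 3"
      using Tz_eq[OF r, of E] unfolding kk_def e_def by simp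
    thus "contains_star_pair E k r" by (rule count_to_star[OF fin r k1])
  next
    assume h: "odd CARD('n) \<and> CARD('n) \<ge> 3 \<and> r \<in> nonzero_squares \<and>
          real (card E) \<ge> (4 + sqrt 3 * real (k choose 2)) * real CARD('a) powr (real CARD('n) / 2)"
    have od: "odd CARD('n)" and d3: "CARD('n) \<ge> 3" using h by auto
    obtain z where z: "z \<noteq> 0" "r = z^2" using h unfolding nonzero_squares_def by auto
    have r: "r \<noteq> 0" using z by simp
    have "(qc r :: complex) = 1" using z qc_sq[OF oddq z(1)] by simp
    hence qr: "(qc r :: complex) ^ CARD('n) = 1" by simp
    define c0 where "c0 = 4 + sqrt 3 * real (k choose 2)"
    have he: "e \<ge> c0 * N" using h pw unfolding e_def c0_def by simp
    have hT: "N^2 * (Q * Tot E r) = N^2 * e^4 + (Q * WR E r - (N^2 * e)^2)"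
      using Tot_real[OF r qr, of E] unfolding NN Q_def e_def .
    have hN: "\<bar>Q * N0 E - e^2\<bar> \<le> N * s * e"
      using N0_odd[OF od, of E] unfolding N_def s_def Q_def e_def .
    have Ns: "N \<ge> Q * s"
    proof -
      have "s ^ 3 \<le> s ^ CARD('n)" using s1 d3 by (rule power_increasing[rotated])
      moreover have "s ^ 3 = Q * s" using ss by (simp add: power3_eq_cube power2_eq_square)
      ultimately show ?thesis unfolding N_def by simp
    qed
    have c4: "c0 \<ge> 4" unfolding c0_def by simp
    have c2': "c0 - sqrt 3 * kk \<ge> 2"
    proof -
      have "sqrt 3 * real (k choose 2) \<ge> sqrt 3 * (kk - 1)" using C by (simp add: mult_left_mono)
      moreover have "sqrt 3 \<le> 2"
        using real_le_lsqrt[of 2 3] by simp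
      moreover have "sqrt 3 * (kk - 1) = sqrt 3 * kk - sqrt 3" by (simp add: algebra_simps)
      ultimately show ?thesis unfolding c0_def by linarith
    qed
    have "Tot E r - N0 E ^ 2 > 2 * (kk - 1) * e^3"
      by (rule odd_ineq[OF Q3 s_def Ns hT WR_nonneg hN N0nn he c4 c2' kk1])
    hence "Tz E r > 2 * (real k - 1) * real (card E) ^ 3"
      using Tz_eq[OF r, of E] unfolding kk_def e_def by simp
    thus "contains_star_pair E k r" by (rule count_to_star[OF fin r k1])
  qed
qed


end
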